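(* Let $\mathcal V,\mathcal W$ be operator spaces and $\Omega\subseteq\mathcal V_{\mathrm{nc}}$ a uniformly open nc set. For a nc function $f:\Omega\to\mathcal W_{\mathrm{nc}}$ the following are equivalent: $f$ is uniformly locally bounded; $f$ is continuous with respect to the uniformly-open topologies on $\mathcal V_{\mathrm{nc}}$ and $\mathcal W_{\mathrm{nc}}$; $f$ is uniformly analytic.
   Context: An operator space is a complex Banach space $\mathcal V$ with norms $\|\cdot\|_n$ on $\mathcal V^{n\times n}$ such that $\|X\oplus Y\|_{n+m}=\max\{\|X\|_n,\|Y\|_m\}$ and $\|TXS\|_n\le\|T\|\|X\|_n\|S\|$ for $T,S\in\mathbb C^{n\times n}$, where $X\oplus Y=\begin{bmatrix}X&0\\0&Y\end{bmatrix}$. $\mathcal V_{\mathrm{nc}}=\coprod_n\mathcal V^{n\times n}$. For $Y\in\mathcal V^{s\times s}$, $r>0$, $B_{\mathrm{nc}}(Y,r)=\coprod_m\{X\in\mathcal V^{sm\times sm}:\|X-\bigoplus_{\alpha=1}^mY\|_{sm}<r\}$; nc balls form a base of a topology on $\mathcal V_{\mathrm{nc}}$, the uniformly-open topology (its open sets are uniformly open). A nc set is closed under direct sums, $\Omega_n=\Omega\cap\mathcal V^{n\times n}$; a nc function satisfies $f(\Omega_n)\subseteq\mathcal W^{n\times n}$, $f(X\oplus Y)=f(X)\oplus f(Y)$, $f(SXS^{-1})=Sf(X)S^{-1}$ for invertible $S\in\mathbb C^{n\times n}$ with $X,SXS^{-1}\in\Omega_n$. $f$ is uniformly locally bounded if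 for every $s$ and $Y\in\Omega_s$ there is $r>0$ with $B_{\mathrm{nc}}(Y,r)\subseteq\Omega$ and $\sup\{\|f(X)\|_{sm}:m\in\mathbb N,X\in B_{\mathrm{nc}}(Y,r)\cap\mathcal V^{sm\times sm}\}<\infty$. $f$ is G-differentiable if for all $n$, $X\in\Omega_n$, $Z\in\mathcal V^{n\times n}$, $\lim_{t\to0}(f(X+tZ)-f(X))/t$ exists in $\mathcal W^{n\times n}$; $f$ is uniformly analytic if it is uniformly locally bounded and G-differentiable. *)

theory Defs
  imports "HOL-Analysis.Analysis"
begin

class complex_vector = real_vector +
  fixes scaleC :: "complex \<Rightarrow> 'a \<Rightarrow> 'a"  (infixr \<open>*\<^sub>C\<close> 75)
  assumes scaleR_scaleC: "scaleR r = scaleC (complex_of_real r)"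
    and scaleC_add_right: "scaleC a (x + y) = scaleC a x + scaleC a y"
    and scaleC_add_left: "scaleC (a + b) x = scaleC a x + scaleC b x"
    and scaleC_scaleC: "scaleC a (scaleC b x) = scaleC (a * b) x"
    and scaleC_one: "scaleC 1 x = x"

class complex_normed_vector = complex_vector + real_normed_vector +
  assumes norm_scaleC: "norm (scaleC a x) = cmod a * norm x"

text \<open>Matrices of size n over a type are represented as functions nat => nat => 'a
  that vanish outside the index block {0..<n} x {0..<n}.\<close>

definition mats :: "nat \<Rightarrow> (nat \<Rightarrow> nat \<Rightarrow> 'a::zero) set" where
  "mats n = {X. \<forall>i j. (n \<le> i \<or> n \<le> j) \<longrightarrow> X i j = 0}"

definition ncspace :: "(nat \<times> (nat \<Rightarrow> nat \<Rightarrow> 'a::zero)) set" where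
  "ncspace = {(n, X). 1 \<le> n \<and> X \<in> mats n}"

definition dsum :: "nat \<Rightarrow> nat \<Rightarrow> (nat \<Rightarrow> nat \<Rightarrow> 'a::zero) \<Rightarrow> (nat \<Rightarrow> nat \<Rightarrow> 'a)
    \<Rightarrow> nat \<Rightarrow> nat \<Rightarrow> 'a" where
  "dsum n m X Y = (\<lambda>i j. if i < n \<and> j < n then X i j
      else if n \<le> i \<and> n \<le> j \<and> i < n + m \<and> j < n + m then Y (i - n) (j - n) else 0)"

definition dsum_rep :: "nat \<Rightarrow> nat \<Rightarrow> (nat \<Rightarrow> nat \<Rightarrow> 'a::zero) \<Rightarrow> nat \<Rightarrow> nat \<Rightarrow> 'a" where
  "dsum_rep s m Y = (\<lambda>i j. if i div s = j div s \<and> i < s * m \<and> j < s * m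
      then Y (i mod s) (j mod s) else 0)"

definition cmat_mult :: "nat \<Rightarrow> (nat \<Rightarrow> nat \<Rightarrow> complex) \<Rightarrow> (nat \<Rightarrow> nat \<Rightarrow> complex)
    \<Rightarrow> nat \<Rightarrow> nat \<Rightarrow> complex" where
  "cmat_mult n A B = (\<lambda>i j. if i < n \<and> j < n then (\<Sum>k<n. A i k * B k j) else 0)"

definition cmat_id :: "nat \<Rightarrow> nat \<Rightarrow> nat \<Rightarrow> complex" where
  "cmat_id n = (\<lambda>i j. if i < n \<and> j < n \<and> i = j then 1 else 0)"

definition cmat_norm :: "nat \<Rightarrow> (nat \<Rightarrow> nat \<Rightarrow> complex) \<Rightarrow> real" where
  "cmat_norm n T = Sup {sqrt (\<Sum>i<n. (cmod (\<Sum>j<n. T i j * x j))\<^sup>2) | x.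
                        (\<Sum>j<n. (cmod (x j))\<^sup>2) \<le> 1}"

definition cmul :: "nat \<Rightarrow> (nat \<Rightarrow> nat \<Rightarrow> complex) \<Rightarrow> (nat \<Rightarrow> nat \<Rightarrow> 'v::complex_vector)
    \<Rightarrow> (nat \<Rightarrow> nat \<Rightarrow> complex) \<Rightarrow> nat \<Rightarrow> nat \<Rightarrow> 'v" where
  "cmul n T X S = (\<lambda>i j. if i < n \<and> j < n
      then (\<Sum>k<n. \<Sum>l<n. (T i k * S l j) *\<^sub>C X k l) else 0)"

text \<open>Operator space structure on a complex Banach space 'v: matrix norms nrm n on
  V^{n x n} (nrm 1 being the given norm of V) satisfying Ruan's axioms.\<close>
definition operator_space ::
  "(nat \<Rightarrow> (nat \<Rightarrow> nat \<Rightarrow> 'v::{complex_normed_vector,banach}) \<Rightarrow> real) \<Rightarrow> bool" where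
  "operator_space nrm \<longleftrightarrow>
     (\<forall>X\<in>mats 1. nrm 1 X = norm (X 0 0)) \<and>
     (\<forall>n\<ge>1. \<forall>X\<in>mats n. \<forall>Y\<in>mats n.
        nrm n (\<lambda>i j. X i j + Y i j) \<le> nrm n X + nrm n Y) \<and>
     (\<forall>n\<ge>1. \<forall>X\<in>mats n. \<forall>c. nrm n (\<lambda>i j. c *\<^sub>C X i j) = cmod c * nrm n X) \<and>
     (\<forall>n\<ge>1. \<forall>X\<in>mats n. nrm n X = 0 \<longleftrightarrow> X = (\<lambda>i j. 0)) \<and>
     (\<forall>n\<ge>1. \<forall>m\<ge>1. \<forall>X\<in>mats n. \<forall>Y\<in>mats m.
        nrm (n + m) (dsum n m X Y) = max (nrm n X) (nrm m Y)) \<and>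
     (\<forall>n\<ge>1. \<forall>X\<in>mats n. \<forall>T\<in>mats n. \<forall>S\<in>mats n.
        nrm n (cmul n T X S) \<le> cmat_norm n T * nrm n X * cmat_norm n S)"

definition ncball :: "(nat \<Rightarrow> (nat \<Rightarrow> nat \<Rightarrow> 'v::complex_normed_vector) \<Rightarrow> real)
    \<Rightarrow> nat \<Rightarrow> (nat \<Rightarrow> nat \<Rightarrow> 'v) \<Rightarrow> real \<Rightarrow> (nat \<times> (nat \<Rightarrow> nat \<Rightarrow> 'v)) set" where
  "ncball nrm s Y r = {(k, X). \<exists>m\<ge>1. k = s * m \<and> X \<in> mats k \<and>
       nrm k (\<lambda>i j. X i j - dsum_rep s m Y i j) < r}"

definition nc_top :: "(nat \<Rightarrow> (nat \<Rightarrow> nat \<Rightarrow> 'v::complex_normed_vector) \<Rightarrow> real)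
    \<Rightarrow> (nat \<times> (nat \<Rightarrow> nat \<Rightarrow> 'v)) topology" where
  "nc_top nrm = topology_generated_by
     {ncball nrm s Y r | s Y r. 1 \<le> s \<and> Y \<in> mats s \<and> 0 < r}"

definition nc_set :: "(nat \<times> (nat \<Rightarrow> nat \<Rightarrow> 'a::zero)) set \<Rightarrow> bool" where
  "nc_set \<Omega> \<longleftrightarrow> \<Omega> \<subseteq> ncspace \<and>
     (\<forall>n X m Y. (n, X) \<in> \<Omega> \<and> (m, Y) \<in> \<Omega> \<longrightarrow> (n + m, dsum n m X Y) \<in> \<Omega>)"

definition nc_function :: "(nat \<times> (nat \<Rightarrow> nat \<Rightarrow> 'v::complex_vector)) set
    \<Rightarrow> (nat \<times> (nat \<Rightarrow> nat \<Rightarrow> 'v) \<Rightarrow> nat \<times> (nat \<Rightarrow> nat \<Rightarrow> 'w::complex_vector)) \<Rightarrow> bool" where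
  "nc_function \<Omega> f \<longleftrightarrow>
     (\<forall>n X. (n, X) \<in> \<Omega> \<longrightarrow> f (n, X) \<in> ncspace \<and> fst (f (n, X)) = n) \<and>
     (\<forall>n X m Y. (n, X) \<in> \<Omega> \<and> (m, Y) \<in> \<Omega> \<longrightarrow>
        f (n + m, dsum n m X Y) = (n + m, dsum n m (snd (f (n, X))) (snd (f (m, Y))))) \<and>
     (\<forall>n S Sinv X. S \<in> mats n \<and> Sinv \<in> mats n \<and>
        cmat_mult n S Sinv = cmat_id n \<and> cmat_mult n Sinv S = cmat_id n \<and>
        (n, X) \<in> \<Omega> \<and> (n, cmul n S X Sinv) \<in> \<Omega> \<longrightarrow>
        f (n, cmul n S X Sinv) = (n, cmul n S (snd (f (n, X))) Sinv))"

definition uniformly_locally_bounded ::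
  "(nat \<Rightarrow> (nat \<Rightarrow> nat \<Rightarrow> 'v::complex_normed_vector) \<Rightarrow> real)
   \<Rightarrow> (nat \<Rightarrow> (nat \<Rightarrow> nat \<Rightarrow> 'w::complex_normed_vector) \<Rightarrow> real)
   \<Rightarrow> (nat \<times> (nat \<Rightarrow> nat \<Rightarrow> 'v)) set
   \<Rightarrow> (nat \<times> (nat \<Rightarrow> nat \<Rightarrow> 'v) \<Rightarrow> nat \<times> (nat \<Rightarrow> nat \<Rightarrow> 'w)) \<Rightarrow> bool" where
  "uniformly_locally_bounded nrmV nrmW \<Omega> f \<longleftrightarrow>
     (\<forall>s Y. (s, Y) \<in> \<Omega> \<longrightarrow> (\<exists>r>0. ncball nrmV s Y r \<subseteq> \<Omega> \<and>
        (\<exists>M. \<forall>k X. (k, X) \<in> ncball nrmV s Y r \<longrightarrow> nrmW k (snd (f (k, X))) \<le> M)))"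

definition G_differentiable ::
  "(nat \<Rightarrow> (nat \<Rightarrow> nat \<Rightarrow> 'w::complex_normed_vector) \<Rightarrow> real)
   \<Rightarrow> (nat \<times> (nat \<Rightarrow> nat \<Rightarrow> 'v::complex_normed_vector)) set
   \<Rightarrow> (nat \<times> (nat \<Rightarrow> nat \<Rightarrow> 'v) \<Rightarrow> nat \<times> (nat \<Rightarrow> nat \<Rightarrow> 'w)) \<Rightarrow> bool" where
  "G_differentiable nrmW \<Omega> f \<longleftrightarrow>
     (\<forall>n X Z. (n, X) \<in> \<Omega> \<and> Z \<in> mats n \<longrightarrow>
        (\<exists>L\<in>mats n. ((\<lambda>t::complex. nrmW n (\<lambda>i j.
            inverse t *\<^sub>C (snd (f (n, \<lambda>p q. X p q + t *\<^sub>C Z p q)) i j - snd (f (n, X)) i j)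
            - L i j)) \<longlongrightarrow> 0) (at 0)))"

definition uniformly_analytic where
  "uniformly_analytic nrmV nrmW \<Omega> f \<longleftrightarrow>
     uniformly_locally_bounded nrmV nrmW \<Omega> f \<and> G_differentiable nrmW \<Omega> f"

end

theory Submission
  imports Defs
begin



lemma scaleC_zero_right[simp]: "a *\<^sub>C (0::'a::complex_vector) = 0"
proof -
  have "a *\<^sub>C (0::'a) = a *\<^sub>C 0 + a *\<^sub>C 0" by (metis add.right_neutral scaleC_add_right)
  then show ?thesis by simp
qed

lemma scaleC_zero_left[simp]: "(0::complex) *\<^sub>C (x::'a::complex_vector) = 0"
  by (metis of_real_0 scaleR_scaleC scaleR_zero_left)

lemma scaleC_minus1[simp]: "(-1::complex) *\<^sub>C (x::'a::complex_vector) = - x"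
  by (metis of_real_1 of_real_minus scaleR_minus1_left scaleR_scaleC)

lemma scaleC_one'[simp]: "(1::complex) *\<^sub>C (x::'a::complex_vector) = x"
  by (rule scaleC_one)

lemma scaleC_minus_right: "a *\<^sub>C (- x) = - (a *\<^sub>C (x::'a::complex_vector))"
  by (metis add.right_inverse add_eq_0_iff2 scaleC_add_right scaleC_zero_right)

lemma scaleC_diff_right: "a *\<^sub>C (x - y) = a *\<^sub>C x - a *\<^sub>C (y::'a::complex_vector)"
  by (metis diff_conv_add_uminus scaleC_add_right scaleC_minus_right)

lemma scaleC_minus_left: "(- a) *\<^sub>C x = - (a *\<^sub>C (x::'a::complex_vector))"
  by (metis mult_minus1 scaleC_minus1 scaleC_scaleC)

lemma scaleC_diff_left: "(a - b) *\<^sub>C x = a *\<^sub>C x - b *\<^sub>C (x::'a::complex_vector)"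
  by (metis diff_conv_add_uminus scaleC_add_left scaleC_minus_left)

lemma scaleC_sum_right: "a *\<^sub>C (\<Sum>k\<in>A. g k) = (\<Sum>k\<in>A. a *\<^sub>C (g k::'a::complex_vector))"
  by (induction A rule: infinite_finite_induct) (auto simp: scaleC_add_right)

lemma scaleC_sum_left: "(\<Sum>k\<in>A. g k) *\<^sub>C x = (\<Sum>k\<in>A. g k *\<^sub>C (x::'a::complex_vector))"
  by (induction A rule: infinite_finite_induct) (auto simp: scaleC_add_left)

lemma scaleC_if: "(if P then 1 else 0) *\<^sub>C (x::'a::complex_vector) = (if P then x else 0)"
  by simp





lemma mats_iff: "X \<in> mats n \<longleftrightarrow> (\<forall>i j. (n \<le> i \<or> n \<le> j) \<longrightarrow> X i j = 0)"
  by (simp add: mats_def)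

lemma mats_out: "X \<in> mats n \<Longrightarrow> \<not> (i < n \<and> j < n) \<Longrightarrow> X i j = 0"
  by (auto simp: mats_def)

lemma mats_add[intro]: "X \<in> mats n \<Longrightarrow> Y \<in> mats n \<Longrightarrow> (\<lambda>i j. X i j + Y i j) \<in> mats n"
  for X Y :: "nat \<Rightarrow> nat \<Rightarrow> 'a::monoid_add"
  by (auto simp: mats_def)
lemma mats_diff[intro]: "X \<in> mats n \<Longrightarrow> Y \<in> mats n \<Longrightarrow> (\<lambda>i j. X i j - Y i j) \<in> mats (n::nat)"
  for X Y :: "nat \<Rightarrow> nat \<Rightarrow> 'a::ab_group_add"
  by (auto simp: mats_def)
lemma mats_scaleC[intro]: "X \<in> mats n \<Longrightarrow> (\<lambda>i j. c *\<^sub>C X i j) \<in> mats n"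
  by (auto simp: mats_def)
lemma mats_zero[intro]: "(\<lambda>i j. 0) \<in> mats n"
  by (auto simp: mats_def)
lemma mats_dsum[intro]: "dsum n m X Y \<in> mats (n + m)"
  by (auto simp: mats_def dsum_def)
lemma mats_dsum_rep[intro]: "dsum_rep s m Y \<in> mats (s * m)"
  by (auto simp: mats_def dsum_rep_def)
lemma mats_cmul[intro]: "cmul n T X S \<in> mats n"
  by (auto simp: mats_def cmul_def)

context
  fixes nrm :: "nat \<Rightarrow> (nat \<Rightarrow> nat \<Rightarrow> 'v::{complex_normed_vector,banach}) \<Rightarrow> real"
  assumes os: "operator_space nrm"
begin

lemma os_tri: "n \<ge> 1 \<Longrightarrow> X \<in> mats n \<Longrightarrow> Y \<in> mats n \<Longrightarrow>
    nrm n (\<lambda>i j. X i j + Y i j) \<le> nrm n X + nrm n Y"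
  using os unfolding operator_space_def by blast

lemma os_hom: "n \<ge> 1 \<Longrightarrow> X \<in> mats n \<Longrightarrow> nrm n (\<lambda>i j. c *\<^sub>C X i j) = cmod c * nrm n X"
  using os unfolding operator_space_def by blast

lemma os_dsum: "n \<ge> 1 \<Longrightarrow> m \<ge> 1 \<Longrightarrow> X \<in> mats n \<Longrightarrow> Y \<in> mats m \<Longrightarrow>
    nrm (n + m) (dsum n m X Y) = max (nrm n X) (nrm m Y)"
  using os unfolding operator_space_def by blast

lemma os_ruan: "n \<ge> 1 \<Longrightarrow> X \<in> mats n \<Longrightarrow> T \<in> mats n \<Longrightarrow> S \<in> mats n \<Longrightarrow>
    nrm n (cmul n T X S) \<le> cmat_norm n T * nrm n X * cmat_norm n S"
  using os unfolding operator_space_def by blast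

lemma os_zero: "n \<ge> 1 \<Longrightarrow> nrm n (\<lambda>i j. 0) = 0"
  using os_hom[of n "\<lambda>i j. 0" 0] by auto

lemma os_neg: "n \<ge> 1 \<Longrightarrow> X \<in> mats n \<Longrightarrow> nrm n (\<lambda>i j. - X i j) = nrm n X"
  using os_hom[of n X "-1"] by simp

lemma os_nonneg: "n \<ge> 1 \<Longrightarrow> X \<in> mats n \<Longrightarrow> 0 \<le> nrm n X"
proof -
  assume a: "n \<ge> 1" "X \<in> mats n"
  have "nrm n (\<lambda>i j. X i j + - X i j) \<le> nrm n X + nrm n (\<lambda>i j. - X i j)"
    using a by (intro os_tri) (auto simp: mats_def)
  then show ?thesis using a os_zero os_neg by simp
qed

lemma os_diff_sym: "n \<ge> 1 \<Longrightarrow> X \<in> mats n \<Longrightarrow> Y \<in> mats n \<Longrightarrow>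
    nrm n (\<lambda>i j. X i j - Y i j) = nrm n (\<lambda>i j. Y i j - X i j)"
  using os_neg[of n "\<lambda>i j. Y i j - X i j"] by (auto intro: mats_diff)

lemma os_tri3: "n \<ge> 1 \<Longrightarrow> X \<in> mats n \<Longrightarrow> Y \<in> mats n \<Longrightarrow> Z \<in> mats n \<Longrightarrow>
    nrm n (\<lambda>i j. X i j - Z i j) \<le> nrm n (\<lambda>i j. X i j - Y i j) + nrm n (\<lambda>i j. Y i j - Z i j)"
  using os_tri[of n "\<lambda>i j. X i j - Y i j" "\<lambda>i j. Y i j - Z i j"] by (auto intro!: mats_diff)

lemma os_sum_le: "n \<ge> 1 \<Longrightarrow> X \<in> mats n \<Longrightarrow> Y \<in> mats n \<Longrightarrow>
    nrm n X \<le> nrm n (\<lambda>i j. X i j - Y i j) + nrm n Y"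
  using os_tri[of n "\<lambda>i j. X i j - Y i j" Y] by (auto intro!: mats_diff)

end




lemma dsum_rep_1: "Y \<in> mats s \<Longrightarrow> dsum_rep s 1 Y = Y"
proof (intro ext)
  fix i j assume Y: "Y \<in> mats s"
  show "dsum_rep s 1 Y i j = Y i j"
    by (cases "i < s \<and> j < s") (auto simp: dsum_rep_def mats_out[OF Y])
qed

lemma dsum_rep_Suc: "1 \<le> s \<Longrightarrow> Y \<in> mats s \<Longrightarrow>
   dsum_rep s (Suc m) Y = dsum (s * m) s (dsum_rep s m Y) Y"
proof (intro ext)
  fix i j assume s: "1 \<le> s" and Y: "Y \<in> mats s"
  show "dsum_rep s (Suc m) Y i j = dsum (s * m) s (dsum_rep s m Y) Y i j"
  proof (cases "i < s * m \<and> j < s * m")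
    case True then show ?thesis by (auto simp: dsum_rep_def dsum_def)
  next
    case False
    show ?thesis
    proof (cases "s * m \<le> i \<and> s * m \<le> j \<and> i < s * m + s \<and> j < s * m + s")
      case True
      then have "i div s = m" "j div s = m" using s
        by (auto simp: div_nat_eqI mult.commute)
      moreover have "i mod s = i - s * m" "j mod s = j - s*m" using True s
        by (metis \<open>i div s = m\<close> \<open>j div s = m\<close> minus_mult_div_eq_mod mult.commute)+
      ultimately show ?thesis using True by (auto simp: dsum_rep_def dsum_def)
    next
      case F2: False
      have "\<not> (i div s = j div s \<and> i < s * Suc m \<and> j < s * Suc m)"
      proof
        assume h: "i div s = j div s \<and> i < s * Suc m \<and> j < s * Suc m"
        then have "i div s < Suc m" "j div s < Suc m" using s
          by (simp_all add: less_mult_imp_div_less mult.commute)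
        moreover have "i < s * m \<longleftrightarrow> i div s < m" "j < s * m \<longleftrightarrow> j div s < m" using s
          by (simp_all add: less_mult_imp_div_less mult.commute div_less_iff_less_mult)
        ultimately show False using h False F2 by auto
      qed
      then show ?thesis using False F2 by (auto simp: dsum_rep_def dsum_def)
    qed
  qed
qed

lemma modmd: "1 \<le> (s::nat) \<Longrightarrow> i mod (s*m) div s = i div s mod m"
  using mod_mult2_eq by fastforce

lemma dsum_rep_rep: "1 \<le> s \<Longrightarrow> dsum_rep (s * m) k (dsum_rep s m Y) = dsum_rep s (m * k) Y"
proof (intro ext)
  fix i j assume s: "1 \<le> s"
  have e1: "i mod (s*m) div s = i div s mod m" "j mod (s*m) div s = j div s mod m"
    using modmd s by blast+
  have e2: "i div (s*m) = i div s div m" "j div (s*m) = j div s div m"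
    by (simp_all add: div_mult2_eq)
  have e3: "i mod (s*m) mod s = i mod s" "j mod (s*m) mod s = j mod s"
    by (simp_all add: mod_mult2_eq)
  have e4: "(i div s = j div s) \<longleftrightarrow> (i div s div m = j div s div m \<and> i div s mod m = j div s mod m)"
    by (metis div_mult_mod_eq)
  have e5: "i < s * m \<Longrightarrow> i mod (s*m) = i" for i by simp
  show "dsum_rep (s * m) k (dsum_rep s m Y) i j = dsum_rep s (m * k) Y i j"
  proof (cases "m = 0")
    case True then show ?thesis by (simp add: dsum_rep_def)
  next
    case False
    then have lt: "i mod (s*m) < s*m" "j mod (s*m) < s*m" using s by simp_all
    show ?thesis unfolding dsum_rep_def
      by (simp only: lt e1 e2 e3 mult.assoc simp_thms) (use e4 in auto)
  qed
qed

context
  fixes nrm :: "nat \<Rightarrow> (nat \<Rightarrow> nat \<Rightarrow> 'v::{complex_normed_vector,banach}) \<Rightarrow> real"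
  assumes os: "operator_space nrm"
begin

lemma os_rep: assumes "1 \<le> s" "1 \<le> k" "A \<in> mats s" shows "nrm (s * k) (dsum_rep s k A) = nrm s A"
  using assms(2)
proof (induction k rule: dec_induct)
  case base then show ?case using assms dsum_rep_1[of A s] by simp
next
  case (step k)
  have "nrm (s * Suc k) (dsum_rep s (Suc k) A) = nrm (s * k + s) (dsum (s * k) s (dsum_rep s k A) A)"
    using step assms by (simp add: dsum_rep_Suc add.commute)
  also have "\<dots> = max (nrm (s*k) (dsum_rep s k A)) (nrm s A)"
    using step assms by (intro os_dsum[OF os]) auto
  finally show ?case using step by simp
qed

end

lemma dsum_rep_diff: "dsum_rep s k (\<lambda>i j. A i j - B i j) = (\<lambda>i j. dsum_rep s k A i j - dsum_rep s k B i j)"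
  for A B :: "nat \<Rightarrow> nat \<Rightarrow> 'a::ab_group_add"
  by (auto simp: dsum_rep_def fun_eq_iff)





definition rmat :: "nat \<Rightarrow> (nat \<Rightarrow> nat \<Rightarrow> bool) \<Rightarrow> nat \<Rightarrow> nat \<Rightarrow> complex" where
  "rmat N R = (\<lambda>i j. if i < N \<and> j < N \<and> R i j then 1 else 0)"

lemma mats_rmat[intro]: "rmat N R \<in> mats N"
  by (auto simp: mats_def rmat_def)

lemma point_exists: assumes "\<forall>a\<in>A. \<forall>b\<in>A. P a \<longrightarrow> P b \<longrightarrow> a = b"
  shows "\<exists>a0. \<forall>a\<in>A. P a \<longrightarrow> a = a0"
proof (cases "\<exists>a\<in>A. P a")
  case True
  then obtain b where b: "b \<in> A" "P b" by blast
  have "\<forall>a\<in>A. P a \<longrightarrow> a = b" using assms b by blast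
  then show ?thesis by blast
next
  case False then show ?thesis by blast
qed

lemma point_sum: assumes a0: "\<forall>a\<in>A. P a \<longrightarrow> a = a0" and "finite A"
  shows "(\<Sum>a\<in>A. if P a then h a else 0) = (if a0 \<in> A \<and> P a0 then h a0 else (0::'c::comm_monoid_add))"
proof -
    have "(\<Sum>a\<in>A. if P a then h a else 0) = (\<Sum>a\<in>A. if a = a0 then (if P a0 then h a0 else 0) else 0)"
    proof (rule sum.cong[OF refl])
      fix a assume "a \<in> A"
      then show "(if P a then h a else 0) = (if a = a0 then (if P a0 then h a0 else 0) else 0)"
      proof (cases "a = a0")
        case False
        with a0 \<open>a \<in> A\<close> have "\<not> P a" by blast
        then show ?thesis using False by simp
      qed simp
    qed
    also have "\<dots> = (if a0 \<in> A \<and> P a0 then h a0 else 0)"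
      using assms(2) by (subst sum.delta) simp_all
    finally show ?thesis .
qed

lemma rmat_row_bound:
  assumes R1: "\<forall>i j j'. i < N \<longrightarrow> j < N \<longrightarrow> j' < N \<longrightarrow> R i j \<longrightarrow> R i j' \<longrightarrow> j = j'"
    and i: "i < N"
  shows "(cmod (\<Sum>j<N. rmat N R i j * x j))\<^sup>2 \<le> (\<Sum>j<N. if R i j then (cmod (x j))\<^sup>2 else 0)"
proof -
  have e: "(\<Sum>j<N. rmat N R i j * x j) = (\<Sum>j<N. if R i j then x j else 0)"
    using i by (intro sum.cong) (auto simp: rmat_def)
  have "\<forall>a\<in>{..<N}. \<forall>b\<in>{..<N}. R i a \<longrightarrow> R i b \<longrightarrow> a = b"
    using R1 i by blast
  then obtain a0 where a0: "\<forall>j\<in>{..<N}. R i j \<longrightarrow> j = a0"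
    using point_exists by blast
  show ?thesis unfolding e using point_sum[OF a0 finite_lessThan, of x] point_sum[OF a0 finite_lessThan, of "\<lambda>j. (cmod (x j))\<^sup>2"] by simp
qed

lemma rmat_norm_aux:
  assumes R1: "\<forall>i j j'. i < N \<longrightarrow> j < N \<longrightarrow> j' < N \<longrightarrow> R i j \<longrightarrow> R i j' \<longrightarrow> j = j'"
    and R2: "\<forall>i i' j. i < N \<longrightarrow> i' < N \<longrightarrow> j < N \<longrightarrow> R i j \<longrightarrow> R i' j \<longrightarrow> i = i'"
    and x: "(\<Sum>j<N. (cmod (x j))\<^sup>2) \<le> 1"
  shows "sqrt (\<Sum>i<N. (cmod (\<Sum>j<N. rmat N R i j * x j))\<^sup>2) \<le> 1"
proof -
  have "(\<Sum>i<N. (cmod (\<Sum>j<N. rmat N R i j * x j))\<^sup>2) \<le> (\<Sum>i<N. \<Sum>j<N. if R i j then (cmod (x j))\<^sup>2 else 0)"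
    using rmat_row_bound[OF R1] by (intro sum_mono) auto
  also have "\<dots> = (\<Sum>j<N. \<Sum>i<N. if R i j then (cmod (x j))\<^sup>2 else 0)"
    by (rule sum.swap)
  also have "\<dots> \<le> (\<Sum>j<N. (cmod (x j))\<^sup>2)"
  proof (intro sum_mono)
    fix j assume j: "j \<in> {..<N}"
    have pe: "\<forall>a\<in>{..<N}. \<forall>b\<in>{..<N}. R a j \<longrightarrow> R b j \<longrightarrow> a = b"
      using R2 j by blast
    obtain a0 where a0: "\<forall>i\<in>{..<N}. R i j \<longrightarrow> i = a0"
      using point_exists[OF pe] by blast
    show "(\<Sum>i<N. if R i j then (cmod (x j))\<^sup>2 else 0) \<le> (cmod (x j))\<^sup>2"
      using point_sum[OF a0 finite_lessThan, of "\<lambda>_. (cmod (x j))\<^sup>2"] by simp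
  qed
  also have "\<dots> \<le> 1" by (rule x)
  finally show ?thesis by simp
qed

lemma cmat_norm_rmat:
  assumes R1: "\<forall>i j j'. i < N \<longrightarrow> j < N \<longrightarrow> j' < N \<longrightarrow> R i j \<longrightarrow> R i j' \<longrightarrow> j = j'"
    and R2: "\<forall>i i' j. i < N \<longrightarrow> i' < N \<longrightarrow> j < N \<longrightarrow> R i j \<longrightarrow> R i' j \<longrightarrow> i = i'"
  shows "cmat_norm N (rmat N R) \<le> 1" "0 \<le> cmat_norm N (rmat N R)"
proof -
  let ?S = "{sqrt (\<Sum>i<N. (cmod (\<Sum>j<N. rmat N R i j * x j))\<^sup>2) | x. (\<Sum>j<N. (cmod (x j))\<^sup>2) \<le> 1}"
  have z: "0 \<in> ?S"
    unfolding mem_Collect_eq by (rule exI[where x="\<lambda>_. 0"]) simp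
  then have ne: "?S \<noteq> {}" by blast
  have ub: "y \<le> 1" if "y \<in> ?S" for y
  proof -
    from that obtain x where "y = sqrt (\<Sum>i<N. (cmod (\<Sum>j<N. rmat N R i j * x j))\<^sup>2)"
      "(\<Sum>j<N. (cmod (x j))\<^sup>2) \<le> 1" by blast
    then show ?thesis using rmat_norm_aux[OF R1 R2] by simp
  qed
  show "cmat_norm N (rmat N R) \<le> 1" unfolding cmat_norm_def
    by (rule cSup_least[OF ne ub])
  have bd: "bdd_above ?S" by (rule bdd_aboveI[of _ 1]) (rule ub)
  show "0 \<le> cmat_norm N (rmat N R)" unfolding cmat_norm_def
    by (rule cSup_upper2[OF z _ bd]) simp
qed

lemma cmul_rmat_entry: "i < N \<Longrightarrow> j < N \<Longrightarrow> k < N \<Longrightarrow> l < N \<Longrightarrow>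
  (rmat N (\<lambda>i k. k = \<sigma> i) i k * rmat N (\<lambda>l j. l = \<tau> j) l j) *\<^sub>C (X k l::'v::complex_vector)
  = (if k = \<sigma> i then (if l = \<tau> j then X k l else 0) else 0)"
  unfolding rmat_def by (cases "k = \<sigma> i"; cases "l = \<tau> j") auto

lemma cmul_rmat:
  "cmul N (rmat N (\<lambda>i k. k = \<sigma> i)) X (rmat N (\<lambda>l j. l = \<tau> j)) =
   (\<lambda>i j. if i < N \<and> j < N \<and> \<sigma> i < N \<and> \<tau> j < N then X (\<sigma> i) (\<tau> j) else 0)"
proof (intro ext)
  fix i j
  show "cmul N (rmat N (\<lambda>i k. k = \<sigma> i)) X (rmat N (\<lambda>l j. l = \<tau> j)) i j =
   (if i < N \<and> j < N \<and> \<sigma> i < N \<and> \<tau> j < N then X (\<sigma> i) (\<tau> j) else 0)"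
  proof (cases "i < N \<and> j < N")
    case True
    have "(\<Sum>k<N. \<Sum>l<N. (rmat N (\<lambda>i k. k = \<sigma> i) i k * rmat N (\<lambda>l j. l = \<tau> j) l j) *\<^sub>C X k l)
       = (\<Sum>k<N. \<Sum>l<N. if k = \<sigma> i then (if l = \<tau> j then X k l else 0) else 0)"
      using True by (intro sum.cong refl) (simp add: cmul_rmat_entry)
    also have "\<dots> = (\<Sum>k<N. if k = \<sigma> i then (\<Sum>l<N. if l = \<tau> j then X k l else 0) else 0)"
      by (intro sum.cong refl) simp
    also have "\<dots> = (if \<sigma> i < N \<and> \<tau> j < N then X (\<sigma> i) (\<tau> j) else 0)"
      by (simp add: sum.delta)
    finally show ?thesis using True by (simp add: cmul_def)
  next
    case False then show ?thesis unfolding cmul_def by auto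
  qed
qed

definition corner :: "nat \<Rightarrow> (nat \<Rightarrow> nat \<Rightarrow> 'a::zero) \<Rightarrow> nat \<Rightarrow> nat \<Rightarrow> 'a" where
  "corner n W = (\<lambda>i j. if i < n \<and> j < n then W i (j + n) else 0)"

definition ur :: "nat \<Rightarrow> (nat \<Rightarrow> nat \<Rightarrow> 'a::zero) \<Rightarrow> nat \<Rightarrow> nat \<Rightarrow> 'a" where
  "ur n B = (\<lambda>i j. if i < n \<and> n \<le> j \<and> j < 2 * n then B i (j - n) else 0)"

lemma mats_corner[intro]: "corner n W \<in> mats n" by (auto simp: mats_def corner_def)
lemma mats_ur[intro]: "ur n B \<in> mats (2 * n)" by (auto simp: mats_def ur_def)

lemma corner_as_cmul: "W \<in> mats (2*n) \<Longrightarrow>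
  cmul (2*n) (rmat (2*n) (\<lambda>i k. k = (if i < n then i else 2*n)))
     W (rmat (2*n) (\<lambda>l j. l = (if j < n then j + n else 2*n)))
   = dsum n n (corner n W) (\<lambda>i j. 0)"
  unfolding cmul_rmat by (auto simp: fun_eq_iff dsum_def corner_def)

lemma ur_as_cmul: "B \<in> mats n \<Longrightarrow>
  cmul (2*n) (rmat (2*n) (\<lambda>i k. k = (if i < n then i else 2*n)))
     (dsum n n B (\<lambda>i j. 0)) (rmat (2*n) (\<lambda>l j. l = (if n \<le> j \<and> j < 2*n then j - n else 2*n)))
   = ur n B"
  unfolding cmul_rmat by (auto simp: fun_eq_iff dsum_def ur_def mats_def)

context
  fixes nrm :: "nat \<Rightarrow> (nat \<Rightarrow> nat \<Rightarrow> 'v::{complex_normed_vector,banach}) \<Rightarrow> real"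
  assumes os: "operator_space nrm"
begin

lemma ruan_le: assumes "N \<ge> 1" "X \<in> mats N"
  and R1: "\<forall>i j j'. i < N \<longrightarrow> j < N \<longrightarrow> j' < N \<longrightarrow> R i j \<longrightarrow> R i j' \<longrightarrow> j = j'"
  and R2: "\<forall>i i' j. i < N \<longrightarrow> i' < N \<longrightarrow> j < N \<longrightarrow> R i j \<longrightarrow> R i' j \<longrightarrow> i = i'"
  and Q1: "\<forall>i j j'. i < N \<longrightarrow> j < N \<longrightarrow> j' < N \<longrightarrow> Q i j \<longrightarrow> Q i j' \<longrightarrow> j = j'"
  and Q2: "\<forall>i i' j. i < N \<longrightarrow> i' < N \<longrightarrow> j < N \<longrightarrow> Q i j \<longrightarrow> Q i' j \<longrightarrow> i = i'"
  shows "nrm N (cmul N (rmat N R) X (rmat N Q)) \<le> nrm N X"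
proof -
  have "nrm N (cmul N (rmat N R) X (rmat N Q)) \<le> cmat_norm N (rmat N R) * nrm N X * cmat_norm N (rmat N Q)"
    using assms by (intro os_ruan[OF os]) auto
  also have "\<dots> \<le> 1 * nrm N X * 1"
    using cmat_norm_rmat[OF R1 R2] cmat_norm_rmat[OF Q1 Q2] os_nonneg[OF os assms(1,2)]
    by (intro mult_mono) auto
  finally show ?thesis by simp
qed

lemma corner_le: assumes "n \<ge> 1" "W \<in> mats (2*n)" shows "nrm n (corner n W) \<le> nrm (2*n) W"
proof -
  have d: "nrm (n + n) (dsum n n (corner n W) (\<lambda>i j. 0)) = max (nrm n (corner n W)) (nrm n (\<lambda>i j. 0))"
    by (rule os_dsum[OF os]) (use assms in auto)
  have "nrm n (corner n W) = nrm (n + n) (dsum n n (corner n W) (\<lambda>i j. 0))"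
    unfolding d using assms os_zero[OF os, of n] mats_corner[of n W]
      os_nonneg[OF os, of n "corner n W"] by auto
  also have "\<dots> = nrm (2*n) (cmul (2*n) (rmat (2*n) (\<lambda>i k. k = (if i < n then i else 2*n)))
     W (rmat (2*n) (\<lambda>l j. l = (if j < n then j + n else 2*n))))"
    using corner_as_cmul[OF assms(2)] by (simp add: mult_2)
  also have "\<dots> \<le> nrm (2*n) W"
    using assms by (intro ruan_le) (auto split: if_splits)
  finally show ?thesis .
qed

lemma ur_le: assumes "n \<ge> 1" "B \<in> mats n" shows "nrm (2*n) (ur n B) \<le> nrm n B"
proof -
  have "nrm (2*n) (ur n B) = nrm (2*n) (cmul (2*n) (rmat (2*n) (\<lambda>i k. k = (if i < n then i else 2*n)))
     (dsum n n B (\<lambda>i j. 0)) (rmat (2*n) (\<lambda>l j. l = (if n \<le> j \<and> j < 2*n then j - n else 2*n))))"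
    using ur_as_cmul[OF assms(2)] by simp
  also have "\<dots> \<le> nrm (2*n) (dsum n n B (\<lambda>i j. 0))"
    using assms mats_dsum[of n n B "\<lambda>i j. 0"] by (intro ruan_le) (auto split: if_splits simp: mult_2)
  also have "\<dots> = max (nrm n B) (nrm n (\<lambda>i j. 0))"
    unfolding mult_2 by (rule os_dsum[OF os]) (use assms in auto)
  also have "\<dots> = nrm n B"
    using assms os_zero[OF os, of n] os_nonneg[OF os, of n B] by auto
  finally show ?thesis .
qed

end




definition smat :: "nat \<Rightarrow> complex \<Rightarrow> nat \<Rightarrow> nat \<Rightarrow> complex" where
  "smat n c = (\<lambda>i j. if i < 2*n \<and> j < 2*n then
       (if i = j then 1 else 0) + (if i < n \<and> j = i + n then c else 0) else 0)"

lemma mats_smat[intro]: "smat n c \<in> mats (2*n)"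
  by (auto simp: mats_def smat_def)

lemma sum_two_points:
  assumes "a < (N::nat)" "P \<Longrightarrow> b < N" "P \<Longrightarrow> a \<noteq> b"
  shows "(\<Sum>k<N. (if k = a then u k else 0) + (if P \<and> k = b then w k else 0)) =
     u a + (if P then w b else (0::'b::comm_monoid_add))"
  unfolding sum.distrib using assms by (cases P) simp_all

lemma smat_row_scaleC: assumes "i < 2*n"
  shows "(\<Sum>k<2*n. smat n c i k *\<^sub>C v k) = v i + (if i < n then c *\<^sub>C v (i + n) else (0::'v::complex_vector))"
proof -
  have "(\<Sum>k<2*n. smat n c i k *\<^sub>C v k) =
     (\<Sum>k<2*n. (if k = i then v k else 0) + (if i < n \<and> k = i + n then c *\<^sub>C v k else 0))"
  proof (rule sum.cong[OF refl])
    fix k assume "k \<in> {..<2*n}"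
    then show "smat n c i k *\<^sub>C v k = (if k = i then v k else 0) + (if i < n \<and> k = i + n then c *\<^sub>C v k else 0)"
      using assms unfolding smat_def by (cases "k = i"; cases "i < n \<and> k = i + n") (auto simp: scaleC_add_left)
  qed
  also have "\<dots> = v i + (if i < n then c *\<^sub>C v (i + n) else 0)"
    using assms by (intro sum_two_points) auto
  finally show ?thesis .
qed

lemma smat_row_mult: assumes "i < 2*n"
  shows "(\<Sum>k<2*n. smat n c i k * v k) = v i + (if i < n then c * v (i + n) else 0)"
proof -
  have "(\<Sum>k<2*n. smat n c i k * v k) =
     (\<Sum>k<2*n. (if k = i then v k else 0) + (if i < n \<and> k = i + n then c * v k else 0))"
  proof (rule sum.cong[OF refl])
    fix k assume "k \<in> {..<2*n}"
    then show "smat n c i k * v k = (if k = i then v k else 0) + (if i < n \<and> k = i + n then c * v k else 0)"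
      using assms unfolding smat_def by (cases "k = i"; cases "i < n \<and> k = i + n") (auto simp: distrib_right)
  qed
  also have "\<dots> = v i + (if i < n then c * v (i + n) else 0)"
    using assms by (intro sum_two_points) auto
  finally show ?thesis .
qed

lemma smat_col_scaleC: assumes "j < 2*n"
  shows "(\<Sum>l<2*n. smat n c l j *\<^sub>C v l) = v j + (if n \<le> j then c *\<^sub>C v (j - n) else (0::'v::complex_vector))"
proof -
  have "(\<Sum>l<2*n. smat n c l j *\<^sub>C v l) =
     (\<Sum>l<2*n. (if l = j then v l else 0) + (if n \<le> j \<and> l = j - n then c *\<^sub>C v l else 0))"
  proof (rule sum.cong[OF refl])
    fix l assume "l \<in> {..<2*n}"
    then show "smat n c l j *\<^sub>C v l = (if l = j then v l else 0) + (if n \<le> j \<and> l = j - n then c *\<^sub>C v l else 0)"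
      using assms unfolding smat_def by (cases "l = j"; cases "n \<le> j \<and> l = j - n") (auto simp: scaleC_add_left)
  qed
  also have "\<dots> = v j + (if n \<le> j then c *\<^sub>C v (j - n) else 0)"
    using assms by (intro sum_two_points) auto
  finally show ?thesis .
qed

lemma smat_mult: "cmat_mult (2*n) (smat n c) (smat n d) = smat n (c + d)"
proof (intro ext)
  fix i j
  show "cmat_mult (2*n) (smat n c) (smat n d) i j = smat n (c + d) i j"
  proof (cases "i < 2*n \<and> j < 2*n")
    case True
    then have "cmat_mult (2*n) (smat n c) (smat n d) i j = smat n d i j + (if i < n then c * smat n d (i + n) j else 0)"
      unfolding cmat_mult_def using smat_row_mult[of i n c "\<lambda>k. smat n d k j"] by simp
    also have "\<dots> = smat n (c + d) i j"
      using True unfolding smat_def by (cases "i < n") auto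
    finally show ?thesis .
  next
    case False then show ?thesis unfolding cmat_mult_def smat_def by auto
  qed
qed

lemma smat_0: "smat n 0 = cmat_id (2*n)"
  by (auto simp: fun_eq_iff smat_def cmat_id_def)

lemma cmul_alt: "i < N \<Longrightarrow> j < N \<Longrightarrow>
  cmul N T X S i j = (\<Sum>k<N. T i k *\<^sub>C (\<Sum>l<N. S l j *\<^sub>C X k l))"
  unfolding cmul_def by (simp add: scaleC_sum_right scaleC_scaleC)

lemma smat_sim:
  assumes X1: "X1 \<in> mats n" and X2: "X2 \<in> mats n"
  shows "cmul (2*n) (smat n c) (dsum n n X1 X2) (smat n (-c)) =
     (\<lambda>i j. dsum n n X1 X2 i j + ur n (\<lambda>p q. c *\<^sub>C (X2 p q - X1 p q)) i j)"
proof (intro ext)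
  fix i j
  let ?D = "dsum n n X1 X2"
  show "cmul (2*n) (smat n c) ?D (smat n (-c)) i j = ?D i j + ur n (\<lambda>p q. c *\<^sub>C (X2 p q - X1 p q)) i j"
  proof (cases "i < 2*n \<and> j < 2*n")
    case True
    let ?h = "\<lambda>k. ?D k j + (if n \<le> j then (-c) *\<^sub>C ?D k (j - n) else 0)"
    have "cmul (2*n) (smat n c) ?D (smat n (-c)) i j = (\<Sum>k<2*n. smat n c i k *\<^sub>C ?h k)"
      using True by (simp add: cmul_alt smat_col_scaleC)
    also have "\<dots> = ?h i + (if i < n then c *\<^sub>C ?h (i + n) else 0)"
      using True by (simp add: smat_row_scaleC)
    also have "\<dots> = ?D i j + ur n (\<lambda>p q. c *\<^sub>C (X2 p q - X1 p q)) i j"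
      using True
      by (cases "i < n"; cases "j < n")
         (auto simp: dsum_def ur_def scaleC_minus_left scaleC_diff_right scaleC_add_right)
    finally show ?thesis .
  next
    case False then show ?thesis unfolding cmul_def dsum_def ur_def by auto
  qed
qed

lemma corner_sim: fixes B :: "nat \<Rightarrow> nat \<Rightarrow> 'a::monoid_add" assumes "B \<in> mats n"
  shows "corner n (\<lambda>i j. dsum n n X1 X2 i j + ur n B i j) = B"
  using assms by (auto simp: fun_eq_iff corner_def dsum_def ur_def mats_out)





lemma ncball_mono: "r \<le> r' \<Longrightarrow> ncball nrm s Y r \<subseteq> ncball nrm s Y r'"
  unfolding ncball_def by fastforce

lemma ncball_sub_ncspace: "1 \<le> s \<Longrightarrow> ncball nrm s Y r \<subseteq> ncspace"
  unfolding ncball_def ncspace_def by auto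

context
  fixes nrm :: "nat \<Rightarrow> (nat \<Rightarrow> nat \<Rightarrow> 'v::{complex_normed_vector,banach}) \<Rightarrow> real"
  assumes os: "operator_space nrm"
begin

lemma ncball_center: assumes "1 \<le> n" "X \<in> mats n" "0 < r" shows "(n, X) \<in> ncball nrm n X r"
proof -
  have "nrm n (\<lambda>i j. X i j - dsum_rep n 1 X i j) = 0"
    using assms dsum_rep_1[OF assms(2)] os_zero[OF os] by simp
  then show ?thesis unfolding ncball_def using assms by (auto intro!: exI[of _ 1])
qed

lemma dsum_rep_2: "1 \<le> s \<Longrightarrow> Y \<in> mats s \<Longrightarrow> dsum_rep s 2 Y = dsum s s Y Y"
  using dsum_rep_Suc[of s Y 1] dsum_rep_1[of Y s] by (simp add: numeral_2_eq_2)

lemma ncball_recenter: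
  assumes s: "1 \<le> s" and Y: "Y \<in> mats s" and nX: "(n, X) \<in> ncball nrm s Y r"
  shows "\<exists>e>0. ncball nrm n X e \<subseteq> ncball nrm s Y r"
proof -
  obtain m where m: "m \<ge> 1" "n = s * m" "X \<in> mats n" and d: "nrm n (\<lambda>i j. X i j - dsum_rep s m Y i j) < r"
    using nX unfolding ncball_def by blast
  define d where "d = nrm n (\<lambda>i j. X i j - dsum_rep s m Y i j)"
  have n1: "1 \<le> n" using m s by simp
  have "ncball nrm n X (r - d) \<subseteq> ncball nrm s Y r"
  proof
    fix p assume "p \<in> ncball nrm n X (r - d)"
    then obtain k Z m' where p: "p = (k, Z)" "m' \<ge> 1" "k = n * m'" "Z \<in> mats k"
      and z: "nrm k (\<lambda>i j. Z i j - dsum_rep n m' X i j) < r - d"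
      unfolding ncball_def by blast
    have k1: "1 \<le> k" using p n1 by simp
    have rr: "dsum_rep s (m * m') Y = dsum_rep n m' (dsum_rep s m Y)"
      using dsum_rep_rep[OF s, of m m' Y] m by simp
    have "nrm k (\<lambda>i j. Z i j - dsum_rep s (m * m') Y i j) \<le>
       nrm k (\<lambda>i j. Z i j - dsum_rep n m' X i j) + nrm k (\<lambda>i j. dsum_rep n m' X i j - dsum_rep n m' (dsum_rep s m Y) i j)"
      unfolding rr using k1 p by (intro os_tri3[OF os]) (auto intro: mats_dsum_rep)
    also have "nrm k (\<lambda>i j. dsum_rep n m' X i j - dsum_rep n m' (dsum_rep s m Y) i j) = d"
    proof -
      have "(\<lambda>i j. dsum_rep n m' X i j - dsum_rep n m' (dsum_rep s m Y) i j) =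
          dsum_rep n m' (\<lambda>i j. X i j - dsum_rep s m Y i j)"
        by (simp add: dsum_rep_diff)
      moreover have "nrm (n * m') (dsum_rep n m' (\<lambda>i j. X i j - dsum_rep s m Y i j)) = d"
        unfolding d_def using n1 p m by (intro os_rep[OF os]) (auto intro!: mats_diff mats_dsum_rep)
      ultimately show ?thesis using p by simp
    qed
    finally have "nrm k (\<lambda>i j. Z i j - dsum_rep s (m * m') Y i j) < r" using z by simp
    then have "\<exists>m''\<ge>1. k = s * m'' \<and> Z \<in> mats k \<and> nrm k (\<lambda>i j. Z i j - dsum_rep s m'' Y i j) < r"
      using p m by (intro exI[of _ "m * m'"]) (auto simp: mult.assoc)
    then show "p \<in> ncball nrm s Y r" unfolding ncball_def p by simp
  qed
  moreover have "0 < r - d" using d d_def by simp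
  ultimately show ?thesis by blast
qed

definition nbhd_open :: "(nat \<times> (nat \<Rightarrow> nat \<Rightarrow> 'v)) set \<Rightarrow> bool" where
  "nbhd_open U \<longleftrightarrow> U \<subseteq> ncspace \<and> (\<forall>n X. (n, X) \<in> U \<longrightarrow> (\<exists>r>0. ncball nrm n X r \<subseteq> U))"

lemma gen_imp_nbhd:
  "generate_topology_on {ncball nrm s Y r | s Y r. 1 \<le> s \<and> Y \<in> mats s \<and> 0 < r} U \<Longrightarrow> nbhd_open U"
proof (induction rule: generate_topology_on.induct)
  case Empty then show ?case by (simp add: nbhd_open_def)
next
  case (Int a b)
  show ?case unfolding nbhd_open_def
  proof (intro conjI allI impI)
    show "a \<inter> b \<subseteq> ncspace" using Int.IH unfolding nbhd_open_def by blast
    fix n X assume "(n, X) \<in> a \<inter> b"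
    then obtain r1 r2 where "r1 > 0" "ncball nrm n X r1 \<subseteq> a" "r2 > 0" "ncball nrm n X r2 \<subseteq> b"
      using Int.IH unfolding nbhd_open_def by blast
    then show "\<exists>r>0. ncball nrm n X r \<subseteq> a \<inter> b"
      using ncball_mono[of "min r1 r2" r1 nrm n X] ncball_mono[of "min r1 r2" r2 nrm n X]
      by (intro exI[of _ "min r1 r2"]) auto
  qed
next
  case (UN K)
  show ?case unfolding nbhd_open_def
  proof (intro conjI allI impI)
    show "\<Union>K \<subseteq> ncspace" using UN.IH unfolding nbhd_open_def by blast
    fix n X assume "(n, X) \<in> \<Union>K"
    then obtain k where "k \<in> K" "(n, X) \<in> k" by blast
    then obtain r where "r > 0" "ncball nrm n X r \<subseteq> k"
      using UN.IH unfolding nbhd_open_def by blast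
    then show "\<exists>r>0. ncball nrm n X r \<subseteq> \<Union>K" using \<open>k \<in> K\<close> by blast
  qed
next
  case (Basis s0)
  then obtain s Y r where b: "s0 = ncball nrm s Y r" "1 \<le> s" "Y \<in> mats s" "0 < r" by blast
  show ?case unfolding nbhd_open_def b(1)
    using ncball_sub_ncspace[OF b(2)] ncball_recenter[OF b(2) b(3)] by blast
qed

lemma nbhd_imp_gen: assumes "nbhd_open U"
  shows "generate_topology_on {ncball nrm s Y r | s Y r. 1 \<le> s \<and> Y \<in> mats s \<and> 0 < r} U"
proof -
  let ?K = "{B. \<exists>n X r. (n, X) \<in> U \<and> 0 < r \<and> B = ncball nrm n X r \<and> B \<subseteq> U}"
  have "U = \<Union>?K"
  proof
    show "\<Union>?K \<subseteq> U" by blast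
    show "U \<subseteq> \<Union>?K"
    proof
      fix p assume "p \<in> U"
      obtain n X where p: "p = (n, X)" by (cases p)
      with \<open>p \<in> U\<close> obtain r where r: "r > 0" "ncball nrm n X r \<subseteq> U"
        using assms unfolding nbhd_open_def by blast
      have "1 \<le> n" "X \<in> mats n" using \<open>p \<in> U\<close> p assms unfolding nbhd_open_def ncspace_def by auto
      then have "p \<in> ncball nrm n X r" using p ncball_center r by simp
      then show "p \<in> \<Union>?K" using r p \<open>p \<in> U\<close> by blast
    qed
  qed
  moreover have "generate_topology_on {ncball nrm s Y r | s Y r. 1 \<le> s \<and> Y \<in> mats s \<and> 0 < r} (\<Union>?K)"
  proof (rule generate_topology_on.UN)
    fix k assume "k \<in> ?K"
    then obtain n X r where k: "(n, X) \<in> U" "0 < r" "k = ncball nrm n X r" by blast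
    have "1 \<le> n" "X \<in> mats n" using k assms unfolding nbhd_open_def ncspace_def by auto
    then show "generate_topology_on {ncball nrm s Y r | s Y r. 1 \<le> s \<and> Y \<in> mats s \<and> 0 < r} k"
      using k by (intro generate_topology_on.Basis) blast
  qed
  ultimately show ?thesis by simp
qed

lemma openin_nc_top: "openin (nc_top nrm) U \<longleftrightarrow> nbhd_open U"
  unfolding nc_top_def openin_topology_generated_by_iff using gen_imp_nbhd nbhd_imp_gen by blast

lemma topspace_nc_top: "topspace (nc_top nrm) = ncspace"
proof
  show "topspace (nc_top nrm) \<subseteq> ncspace"
    unfolding nc_top_def topology_generated_by_topspace
  proof (rule Union_least)
    fix B assume "B \<in> {ncball nrm s Y r | s Y r. 1 \<le> s \<and> Y \<in> mats s \<and> 0 < r}"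
    then obtain s Y r where "B = ncball nrm s Y r" "1 \<le> s" by blast
    then show "B \<subseteq> ncspace" using ncball_sub_ncspace by simp
  qed
  show "ncspace \<subseteq> topspace (nc_top nrm)"
  proof
    fix p :: "nat \<times> (nat \<Rightarrow> nat \<Rightarrow> 'v)" assume "p \<in> ncspace"
    then obtain n X where p: "p = (n, X)" "1 \<le> n" "X \<in> mats n" unfolding ncspace_def by blast
    have pb: "p \<in> ncball nrm n X 1" using ncball_center p by simp
    show "p \<in> topspace (nc_top nrm)"
      unfolding nc_top_def topology_generated_by_topspace
      by (rule UnionI[of "ncball nrm n X 1"]) (use p pb in \<open>auto intro!: exI[of _ n] exI[of _ X] exI[of _ "1::real"]\<close>)
  qed
qed

lemma ncball_open: "1 \<le> s \<Longrightarrow> Y \<in> mats s \<Longrightarrow> 0 < r \<Longrightarrow> openin (nc_top nrm) (ncball nrm s Y r)"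
  unfolding nc_top_def by (rule topology_generated_by_Basis) auto

end




lemma os_zero_iff: "operator_space nrm \<Longrightarrow> n \<ge> 1 \<Longrightarrow> X \<in> mats n \<Longrightarrow> nrm n X = 0 \<Longrightarrow> X = (\<lambda>i j. 0)"
  unfolding operator_space_def by blast

definition blk :: "nat \<Rightarrow> (nat \<Rightarrow> nat \<Rightarrow> 'a::complex_vector) \<Rightarrow> (nat \<Rightarrow> nat \<Rightarrow> 'a) \<Rightarrow> complex \<Rightarrow> nat \<Rightarrow> nat \<Rightarrow> 'a" where
  "blk n X1 X2 c = (\<lambda>i j. dsum n n X1 X2 i j + ur n (\<lambda>p q. c *\<^sub>C (X2 p q - X1 p q)) i j)"

lemma mats_blk[intro]: "blk n X1 X2 c \<in> mats (2*n)"
proof -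
  have "dsum n n X1 X2 \<in> mats (2*n)" using mats_dsum[of n n X1 X2] by (simp add: mult_2)
  then show ?thesis unfolding blk_def by (intro mats_add) auto
qed

lemma corner_blk: "X1 \<in> mats n \<Longrightarrow> X2 \<in> mats n \<Longrightarrow>
   corner n (blk n X1 X2 c) = (\<lambda>p q. c *\<^sub>C (X2 p q - X1 p q))"
  unfolding blk_def by (rule corner_sim) (auto intro!: mats_scaleC mats_diff)

lemma dsum_diff: "(\<lambda>i j. dsum n n A1 A2 i j - dsum n n B1 B2 i j) =
   dsum n n (\<lambda>i j. A1 i j - B1 i j) (\<lambda>i j. A2 i j - B2 i j)"
  for A1 :: "nat \<Rightarrow> nat \<Rightarrow> 'a::ab_group_add"
  by (auto simp: fun_eq_iff dsum_def)

context
  fixes nrmV :: "nat \<Rightarrow> (nat \<Rightarrow> nat \<Rightarrow> 'v::{complex_normed_vector,banach}) \<Rightarrow> real"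
    and nrmW :: "nat \<Rightarrow> (nat \<Rightarrow> nat \<Rightarrow> 'w::{complex_normed_vector,banach}) \<Rightarrow> real"
    and \<Omega> :: "(nat \<times> (nat \<Rightarrow> nat \<Rightarrow> 'v)) set"
    and f :: "nat \<times> (nat \<Rightarrow> nat \<Rightarrow> 'v) \<Rightarrow> nat \<times> (nat \<Rightarrow> nat \<Rightarrow> 'w)"
  assumes osV: "operator_space nrmV" and osW: "operator_space nrmW"
    and ncs: "nc_set \<Omega>" and ncf: "nc_function \<Omega> f"
begin

lemma om_ncspace: "(n, X) \<in> \<Omega> \<Longrightarrow> 1 \<le> n \<and> X \<in> mats n"
  using ncs unfolding nc_set_def ncspace_def by blast

lemma f_shape: "(n, X) \<in> \<Omega> \<Longrightarrow> f (n, X) = (n, snd (f (n, X))) \<and> snd (f (n, X)) \<in> mats n"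
proof -
  assume a: "(n, X) \<in> \<Omega>"
  then have "f (n, X) \<in> ncspace" "fst (f (n, X)) = n" using ncf unfolding nc_function_def by blast+
  then show ?thesis unfolding ncspace_def by (cases "f (n, X)") auto
qed

lemma om_dsum: "(n, X) \<in> \<Omega> \<Longrightarrow> (m, Y) \<in> \<Omega> \<Longrightarrow> (n + m, dsum n m X Y) \<in> \<Omega>"
  using ncs unfolding nc_set_def by blast

lemma f_dsum: "(n, X) \<in> \<Omega> \<Longrightarrow> (m, Y) \<in> \<Omega> \<Longrightarrow>
   f (n + m, dsum n m X Y) = (n + m, dsum n m (snd (f (n, X))) (snd (f (m, Y))))"
  using ncf unfolding nc_function_def by blast

lemma f_sim: "S \<in> mats n \<Longrightarrow> Sinv \<in> mats n \<Longrightarrow> cmat_mult n S Sinv = cmat_id n \<Longrightarrow>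
   cmat_mult n Sinv S = cmat_id n \<Longrightarrow> (n, X) \<in> \<Omega> \<Longrightarrow> (n, cmul n S X Sinv) \<in> \<Omega> \<Longrightarrow>
   f (n, cmul n S X Sinv) = (n, cmul n S (snd (f (n, X))) Sinv)"
  using ncf unfolding nc_function_def by blast

lemma f_rep: assumes Y: "(s, Y) \<in> \<Omega>" and m: "1 \<le> m"
  shows "(s * m, dsum_rep s m Y) \<in> \<Omega> \<and> f (s * m, dsum_rep s m Y) = (s * m, dsum_rep s m (snd (f (s, Y))))"
  using m
proof (induction m rule: dec_induct)
  case base
  have "Y \<in> mats s" using om_ncspace[OF Y] by simp
  moreover have "snd (f (s, Y)) \<in> mats s" using f_shape[OF Y] by simp
  ultimately have "dsum_rep s (Suc 0) Y = Y" "dsum_rep s (Suc 0) (snd (f (s, Y))) = snd (f (s, Y))"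
    using dsum_rep_1 by (metis One_nat_def)+
  then show ?case using Y f_shape[OF Y] by simp
next
  case (step m)
  have s1: "1 \<le> s" and Ym: "Y \<in> mats s" using om_ncspace[OF Y] by auto
  have fY: "snd (f (s, Y)) \<in> mats s" using f_shape[OF Y] by simp
  have e1: "dsum_rep s (Suc m) Y = dsum (s * m) s (dsum_rep s m Y) Y" by (rule dsum_rep_Suc[OF s1 Ym])
  have e2: "dsum_rep s (Suc m) (snd (f (s, Y))) = dsum (s * m) s (dsum_rep s m (snd (f (s, Y)))) (snd (f (s, Y)))"
    by (rule dsum_rep_Suc[OF s1 fY])
  have e3: "s * Suc m = s * m + s" by simp
  have IH1: "(s * m, dsum_rep s m Y) \<in> \<Omega>" and IH2: "f (s * m, dsum_rep s m Y) = (s * m, dsum_rep s m (snd (f (s, Y))))"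
    using step.IH by auto
  show ?case unfolding e1 e2 e3
    using om_dsum[OF IH1 Y] f_dsum[OF IH1 Y] IH2 by simp
qed

lemma f_blk: assumes X1: "(n, X1) \<in> \<Omega>" and X2: "(n, X2) \<in> \<Omega>" and A: "(2*n, blk n X1 X2 c) \<in> \<Omega>"
  shows "f (2*n, blk n X1 X2 c) = (2*n, blk n (snd (f (n, X1))) (snd (f (n, X2))) c)"
proof -
  have m1: "X1 \<in> mats n" "X2 \<in> mats n" using om_ncspace X1 X2 by auto
  have m2: "snd (f (n, X1)) \<in> mats n" "snd (f (n, X2)) \<in> mats n" using f_shape X1 X2 by auto
  have D: "(2*n, dsum n n X1 X2) \<in> \<Omega>" using om_dsum[OF X1 X2] by (simp add: mult_2)
  have fD: "f (2*n, dsum n n X1 X2) = (2*n, dsum n n (snd (f (n, X1))) (snd (f (n, X2))))"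
    using f_dsum[OF X1 X2] by (simp add: mult_2)
  have eq: "blk n X1 X2 c = cmul (2*n) (smat n c) (dsum n n X1 X2) (smat n (-c))"
    unfolding blk_def using smat_sim[OF m1] by simp
  have eqf: "blk n (snd (f (n, X1))) (snd (f (n, X2))) c =
      cmul (2*n) (smat n c) (dsum n n (snd (f (n, X1))) (snd (f (n, X2)))) (smat n (-c))"
    unfolding blk_def using smat_sim[OF m2] by simp
  have i1: "cmat_mult (2*n) (smat n c) (smat n (-c)) = cmat_id (2*n)"
    using smat_mult[of n c "-c"] smat_0[of n] by simp
  have i2: "cmat_mult (2*n) (smat n (-c)) (smat n c) = cmat_id (2*n)"
    using smat_mult[of n "-c" c] smat_0[of n] by simp
  have "f (2*n, cmul (2*n) (smat n c) (dsum n n X1 X2) (smat n (-c))) =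
      (2*n, cmul (2*n) (smat n c) (snd (f (2*n, dsum n n X1 X2))) (smat n (-c)))"
    using A eq by (intro f_sim[OF mats_smat mats_smat i1 i2 D]) simp
  then show ?thesis using eq eqf fD by simp
qed

lemma lip:
  assumes Y: "(s, Y) \<in> \<Omega>" and r: "0 < r" and ball: "ncball nrmV s Y r \<subseteq> \<Omega>"
    and bnd: "\<And>k X. (k, X) \<in> ncball nrmV s Y r \<Longrightarrow> nrmW k (snd (f (k, X))) \<le> M"
    and m: "1 \<le> m"
    and X1: "X1 \<in> mats (s*m)" "nrmV (s*m) (\<lambda>i j. X1 i j - dsum_rep s m Y i j) < r/2"
    and X2: "X2 \<in> mats (s*m)" "nrmV (s*m) (\<lambda>i j. X2 i j - dsum_rep s m Y i j) < r/2"
  shows "nrmW (s*m) (\<lambda>i j. snd (f (s*m, X1)) i j - snd (f (s*m, X2)) i j)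
          \<le> (4 * M / r) * nrmV (s*m) (\<lambda>i j. X1 i j - X2 i j)"
proof -
  define n where "n = s * m"
  have s1: "1 \<le> s" and Ym: "Y \<in> mats s" using om_ncspace[OF Y] by auto
  have n1: "1 \<le> n" using s1 m n_def by simp
  have in1: "(n, X1) \<in> ncball nrmV s Y r" unfolding ncball_def n_def using X1 m r
    by (auto intro!: exI[of _ m])
  have in2: "(n, X2) \<in> ncball nrmV s Y r" unfolding ncball_def n_def using X2 m r
    by (auto intro!: exI[of _ m])
  have O1: "(n, X1) \<in> \<Omega>" and O2: "(n, X2) \<in> \<Omega>" using in1 in2 ball by auto
  define F1 where "F1 = snd (f (n, X1))"
  define F2 where "F2 = snd (f (n, X2))"
  have F1m: "F1 \<in> mats n" and F2m: "F2 \<in> mats n" using f_shape O1 O2 F1_def F2_def by auto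
  define \<delta> where "\<delta> = nrmV n (\<lambda>i j. X1 i j - X2 i j)"
  have X1m: "X1 \<in> mats n" and X2m: "X2 \<in> mats n" using X1 X2 n_def by auto
  have d0: "0 \<le> \<delta>" unfolding \<delta>_def using os_nonneg[OF osV n1] X1m X2m by (auto intro: mats_diff)
  show ?thesis
  proof (cases "\<delta> = 0")
    case True
    then have "(\<lambda>i j. X1 i j - X2 i j) = (\<lambda>i j. 0)"
      using os_zero_iff[OF osV n1] X1m X2m unfolding \<delta>_def by (auto intro: mats_diff)
    then have "X1 = X2" by (auto simp: fun_eq_iff dest: fun_cong)
    then show ?thesis using os_zero[OF osW n1] True unfolding \<delta>_def n_def by simp
  next
    case False
    then have dp: "0 < \<delta>" using d0 by simp
    define c where "c = complex_of_real (r / (4 * \<delta>))"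
    have cmod_c: "cmod c = r / (4 * \<delta>)" unfolding c_def norm_of_real using r dp by simp
    define Ym where "Ym = dsum_rep s m Y"
    have Ymm: "Ym \<in> mats n" unfolding Ym_def n_def by (rule mats_dsum_rep)
    have rep2: "dsum_rep s (2*m) Y = dsum n n Ym Ym"
    proof -
      have "dsum_rep s (2*m) Y = dsum_rep n 2 Ym"
        unfolding Ym_def n_def using dsum_rep_rep[OF s1, of m 2 Y] by (simp add: mult.commute)
      also have "\<dots> = dsum n n Ym Ym" by (rule dsum_rep_2[OF osV n1 Ymm])
      finally show ?thesis .
    qed
    define A where "A = blk n X1 X2 c"
    have Am: "A \<in> mats (2*n)" unfolding A_def by (rule mats_blk)
    define D1 where "D1 = (\<lambda>i j. X1 i j - Ym i j)"
    define D2 where "D2 = (\<lambda>i j. X2 i j - Ym i j)"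
    define B where "B = (\<lambda>p q. c *\<^sub>C (X2 p q - X1 p q))"
    have D1m: "D1 \<in> mats n" and D2m: "D2 \<in> mats n" and Bm: "B \<in> mats n"
      unfolding D1_def D2_def B_def using X1m X2m Ymm by (auto intro!: mats_diff mats_scaleC)
    have Adiff: "(\<lambda>i j. A i j - dsum_rep s (2*m) Y i j) = (\<lambda>i j. dsum n n D1 D2 i j + ur n B i j)"
      unfolding rep2 A_def blk_def D1_def D2_def B_def by (auto simp: fun_eq_iff dsum_def ur_def)
    have t1: "nrmV (2*n) (\<lambda>i j. dsum n n D1 D2 i j + ur n B i j) \<le> nrmV (2*n) (dsum n n D1 D2) + nrmV (2*n) (ur n B)"
      using n1 mats_dsum[of n n D1 D2] mats_ur[of n B] by (intro os_tri[OF osV]) (auto simp: mult_2)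
    have t2: "nrmV (2*n) (dsum n n D1 D2) = max (nrmV n D1) (nrmV n D2)"
      using os_dsum[OF osV n1 n1 D1m D2m] by (simp add: mult_2)
    have t3: "nrmV (2*n) (ur n B) \<le> nrmV n B" by (rule ur_le[OF osV n1 Bm])
    have t4: "nrmV n B = cmod c * \<delta>"
    proof -
      have "nrmV n B = cmod c * nrmV n (\<lambda>i j. X2 i j - X1 i j)"
        unfolding B_def using n1 X1m X2m by (intro os_hom[OF osV]) (auto intro: mats_diff)
      also have "nrmV n (\<lambda>i j. X2 i j - X1 i j) = \<delta>"
        unfolding \<delta>_def using os_diff_sym[OF osV n1 X1m X2m] by simp
      finally show ?thesis .
    qed
    have t5: "cmod c * \<delta> = r / 4" using cmod_c dp by simp
    have le: "nrmV (2*n) (\<lambda>i j. dsum n n D1 D2 i j + ur n B i j) \<le> max (nrmV n D1) (nrmV n D2) + r / 4"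
      using t1 t2 t3 t4 t5 by linarith
    have a1: "nrmV n D1 < r/2" unfolding D1_def Ym_def n_def using X1(2) by simp
    have a2: "nrmV n D2 < r/2" unfolding D2_def Ym_def n_def using X2(2) by simp
    have "max (nrmV n D1) (nrmV n D2) < r/2" using a1 a2 by simp
    then have nA: "nrmV (2*n) (\<lambda>i j. A i j - dsum_rep s (2*m) Y i j) < r"
      unfolding Adiff using le r by linarith
    have inA: "(2*n, A) \<in> ncball nrmV s Y r" unfolding ncball_def
      using nA Am m by (auto intro!: exI[of _ "2*m"] simp: n_def)
    then have OA: "(2*n, A) \<in> \<Omega>" using ball by auto
    have fA: "f (2*n, A) = (2*n, blk n F1 F2 c)"
      unfolding A_def F1_def F2_def by (rule f_blk[OF O1 O2 OA[unfolded A_def]])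
    have "nrmW (2*n) (blk n F1 F2 c) \<le> M" using bnd[OF inA] fA by simp
    moreover have "nrmW n (corner n (blk n F1 F2 c)) \<le> nrmW (2*n) (blk n F1 F2 c)"
      by (rule corner_le[OF osW n1 mats_blk])
    moreover have "nrmW n (corner n (blk n F1 F2 c)) = cmod c * nrmW n (\<lambda>i j. F1 i j - F2 i j)"
    proof -
      have "nrmW n (corner n (blk n F1 F2 c)) = cmod c * nrmW n (\<lambda>i j. F2 i j - F1 i j)"
        unfolding corner_blk[OF F1m F2m] using n1 F1m F2m by (intro os_hom[OF osW]) (auto intro: mats_diff)
      then show ?thesis using os_diff_sym[OF osW n1 F1m F2m] by simp
    qed
    ultimately have "cmod c * nrmW n (\<lambda>i j. F1 i j - F2 i j) \<le> M" by simp
    moreover have cpos: "0 < cmod c" using cmod_c r dp by simp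
    ultimately have "nrmW n (\<lambda>i j. F1 i j - F2 i j) \<le> M / cmod c"
      by (simp add: pos_le_divide_eq mult.commute)
    also have "M / cmod c = (4 * M / r) * \<delta>" unfolding cmod_c using r dp by (simp add: field_simps)
    finally show ?thesis unfolding F1_def F2_def \<delta>_def n_def .
  qed
qed

end




context
  fixes nrmV :: "nat \<Rightarrow> (nat \<Rightarrow> nat \<Rightarrow> 'v::{complex_normed_vector,banach}) \<Rightarrow> real"
    and nrmW :: "nat \<Rightarrow> (nat \<Rightarrow> nat \<Rightarrow> 'w::{complex_normed_vector,banach}) \<Rightarrow> real"
    and \<Omega> :: "(nat \<times> (nat \<Rightarrow> nat \<Rightarrow> 'v)) set"
    and f :: "nat \<times> (nat \<Rightarrow> nat \<Rightarrow> 'v) \<Rightarrow> nat \<times> (nat \<Rightarrow> nat \<Rightarrow> 'w)"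
  assumes osV: "operator_space nrmV" and osW: "operator_space nrmW"
    and ncs: "nc_set \<Omega>" and ncf: "nc_function \<Omega> f"
begin

lemma gd_est:
  assumes X: "(n, X) \<in> \<Omega>" and r: "0 < r" and ball: "ncball nrmV n X r \<subseteq> \<Omega>"
    and bnd: "\<And>k Y. (k, Y) \<in> ncball nrmV n X r \<Longrightarrow> nrmW k (snd (f (k, Y))) \<le> M"
    and Z: "Z \<in> mats n"
    and eps: "0 < \<epsilon>" "\<epsilon> * nrmV n Z \<le> r / 8"
    and t: "t \<noteq> 0" "cmod t * nrmV n Z < r / 4"
  defines "G \<equiv> \<lambda>t. (\<lambda>i j. dsum n n X (\<lambda>p q. X p q + t *\<^sub>C Z p q) i j + ur n (\<lambda>p q. complex_of_real \<epsilon> *\<^sub>C Z p q) i j)"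
  defines "L \<equiv> (\<lambda>i j. inverse (complex_of_real \<epsilon>) *\<^sub>C corner n (snd (f (2*n, G 0))) i j)"
  shows "(\<lambda>i j. inverse t *\<^sub>C (snd (f (n, \<lambda>p q. X p q + t *\<^sub>C Z p q)) i j - snd (f (n, X)) i j) - L i j) \<in> mats n \<and>
     nrmW n (\<lambda>i j. inverse t *\<^sub>C (snd (f (n, \<lambda>p q. X p q + t *\<^sub>C Z p q)) i j - snd (f (n, X)) i j) - L i j)
       \<le> (1 / \<epsilon>) * (4 * M / r) * (cmod t * nrmV n Z)"
proof -
  have n1: "1 \<le> n" and Xm: "X \<in> mats n" using om_ncspace[OF osV osW ncs ncf X] by auto
  define z where "z = nrmV n Z"
  have z0: "0 \<le> z" unfolding z_def by (rule os_nonneg[OF osV n1 Z])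
  define e where "e = complex_of_real \<epsilon>"
  have e0: "e \<noteq> 0" and cme: "cmod e = \<epsilon>" unfolding e_def using eps by auto
  define Xt where "Xt = (\<lambda>p q. X p q + t *\<^sub>C Z p q)"
  have Xtm: "Xt \<in> mats n" unfolding Xt_def using Xm Z by (intro mats_add mats_scaleC)
  have tZm: "(\<lambda>p q. t *\<^sub>C Z p q) \<in> mats n" using Z by (rule mats_scaleC)
  have ntZ: "nrmV n (\<lambda>p q. t *\<^sub>C Z p q) = cmod t * z" unfolding z_def by (rule os_hom[OF osV n1 Z])
  have "(\<lambda>i j. Xt i j - dsum_rep n 1 X i j) = (\<lambda>p q. t *\<^sub>C Z p q)"
    unfolding dsum_rep_1[OF Xm] Xt_def by simp
  then have "nrmV (n * 1) (\<lambda>i j. Xt i j - dsum_rep n 1 X i j) < r"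
    using ntZ t(2) r unfolding z_def by simp
  then have Xtb: "(n, Xt) \<in> ncball nrmV n X r" unfolding ncball_def using Xtm
    by (auto intro!: exI[of _ 1])
  then have XtO: "(n, Xt) \<in> \<Omega>" using ball by auto
  have eZm: "(\<lambda>p q. e *\<^sub>C Z p q) \<in> mats n" using Z by (rule mats_scaleC)
  have neZ: "nrmV n (\<lambda>p q. e *\<^sub>C Z p q) = \<epsilon> * z" unfolding z_def using os_hom[OF osV n1 Z, of e] cme by simp
  have Gm: "G s \<in> mats (n*2)" for s
  proof -
    have "dsum n n X (\<lambda>p q. X p q + s *\<^sub>C Z p q) \<in> mats (n*2)" using mats_dsum by (metis mult_2_right)
    moreover have "ur n (\<lambda>p q. complex_of_real \<epsilon> *\<^sub>C Z p q) \<in> mats (n*2)" using mats_ur by (metis mult.commute)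
    ultimately show ?thesis unfolding G_def by (rule mats_add)
  qed
  have rep2: "dsum_rep n 2 X = dsum n n X X" by (rule dsum_rep_2[OF osV n1 Xm])
  have Gdiff: "(\<lambda>i j. G s i j - dsum_rep n 2 X i j) =
      (\<lambda>i j. dsum n n (\<lambda>p q. 0) (\<lambda>p q. s *\<^sub>C Z p q) i j + ur n (\<lambda>p q. e *\<^sub>C Z p q) i j)" for s
    unfolding rep2 G_def e_def by (auto simp: fun_eq_iff dsum_def ur_def)
  have Gball: "nrmV (n*2) (\<lambda>i j. G s i j - dsum_rep n 2 X i j) < r / 2" if s: "cmod s * z < r / 4" for s
  proof -
    have sZm: "(\<lambda>p q. s *\<^sub>C Z p q) \<in> mats n" using Z by (rule mats_scaleC)
    have "nrmV (n*2) (\<lambda>i j. dsum n n (\<lambda>p q. 0) (\<lambda>p q. s *\<^sub>C Z p q) i j + ur n (\<lambda>p q. e *\<^sub>C Z p q) i j)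
        \<le> nrmV (n*2) (dsum n n (\<lambda>p q. 0) (\<lambda>p q. s *\<^sub>C Z p q)) + nrmV (n*2) (ur n (\<lambda>p q. e *\<^sub>C Z p q))"
      using n1 mats_dsum[of n n] mats_ur[of n] by (intro os_tri[OF osV]) (auto simp: mult_2_right mult.commute)
    moreover have "nrmV (n*2) (dsum n n (\<lambda>p q. 0) (\<lambda>p q. s *\<^sub>C Z p q)) = max 0 (cmod s * z)"
      using os_dsum[OF osV n1 n1 mats_zero sZm] os_zero[OF osV n1] os_hom[OF osV n1 Z, of s]
      unfolding z_def by (simp add: mult_2_right)
    moreover have "nrmV (n*2) (ur n (\<lambda>p q. e *\<^sub>C Z p q)) \<le> \<epsilon> * z"
      using ur_le[OF osV n1 eZm] neZ by (simp add: mult.commute)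
    moreover have "\<epsilon> * z \<le> r / 8" using eps unfolding z_def by simp
    moreover have "0 \<le> cmod s * z" using z0 by simp
    ultimately show ?thesis unfolding Gdiff using s r by (simp add: max_def)
  qed
  have Gb: "(n*2, G s) \<in> ncball nrmV n X r" if "cmod s * z < r / 4" for s
    unfolding ncball_def using Gball[OF that] Gm r by (auto intro!: exI[of _ 2])
  have Gt_b: "(n*2, G t) \<in> ncball nrmV n X r" using Gb t(2) unfolding z_def by simp
  have G0_b: "(n*2, G 0) \<in> ncball nrmV n X r" using Gb r by simp
  have lipG: "nrmW (n*2) (\<lambda>i j. snd (f (n*2, G t)) i j - snd (f (n*2, G 0)) i j)
      \<le> (4 * M / r) * nrmV (n*2) (\<lambda>i j. G t i j - G 0 i j)"
    by (rule lip[OF osV osW ncs ncf X r ball bnd, of 2 "G t" "G 0"])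
       (use Gm Gball t(2) r z_def in auto)
  have "(\<lambda>i j. G t i j - G 0 i j) = dsum n n (\<lambda>p q. 0) (\<lambda>p q. t *\<^sub>C Z p q)"
    unfolding G_def by (auto simp: fun_eq_iff dsum_def ur_def)
  then have nGG: "nrmV (n*2) (\<lambda>i j. G t i j - G 0 i j) = cmod t * z"
    using os_dsum[OF osV n1 n1 mats_zero tZm] os_zero[OF osV n1] ntZ z0 by (simp add: mult_2_right)
  have Gblk: "G t = blk n X Xt (e / t)"
  proof -
    have "(\<lambda>p q. (e / t) *\<^sub>C (Xt p q - X p q)) = (\<lambda>p q. e *\<^sub>C Z p q)"
      unfolding Xt_def using t(1) by (simp add: scaleC_scaleC)
    then show ?thesis unfolding G_def blk_def e_def by (simp add: Xt_def)
  qed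
  have fGt: "f (2*n, G t) = (2*n, blk n (snd (f (n, X))) (snd (f (n, Xt))) (e / t))"
    unfolding Gblk by (rule f_blk[OF osV osW ncs ncf X XtO]) (use Gt_b ball Gblk in \<open>auto simp: mult.commute\<close>)
  have fX: "snd (f (n, X)) \<in> mats n" and fXt: "snd (f (n, Xt)) \<in> mats n"
    using f_shape[OF osV osW ncs ncf X] f_shape[OF osV osW ncs ncf XtO] by auto
  have G0m: "snd (f (2*n, G 0)) \<in> mats (2*n)"
    using f_shape[OF osV osW ncs ncf, of "2*n" "G 0"] G0_b ball by (auto simp: mult.commute)
  have Gtm: "snd (f (2*n, G t)) \<in> mats (2*n)"
    using f_shape[OF osV osW ncs ncf, of "2*n" "G t"] Gt_b ball by (auto simp: mult.commute)
  have cornGt: "corner n (snd (f (2*n, G t))) = (\<lambda>p q. (e / t) *\<^sub>C (snd (f (n, Xt)) p q - snd (f (n, X)) p q))"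
    unfolding fGt using corner_blk[OF fX fXt] by simp
  define Q where "Q = (\<lambda>i j. inverse t *\<^sub>C (snd (f (n, Xt)) i j - snd (f (n, X)) i j) - L i j)"
  have Lm: "L \<in> mats n" unfolding L_def by (intro mats_scaleC mats_corner)
  have Qm: "Q \<in> mats n" unfolding Q_def using fX fXt Lm by (intro mats_diff mats_scaleC)
  have Qeq: "Q = (\<lambda>i j. inverse e *\<^sub>C corner n (\<lambda>a b. snd (f (2*n, G t)) a b - snd (f (2*n, G 0)) a b) i j)"
  proof (intro ext)
    fix i j
    have "corner n (\<lambda>a b. snd (f (2*n, G t)) a b - snd (f (2*n, G 0)) a b) i j =
        corner n (snd (f (2*n, G t))) i j - corner n (snd (f (2*n, G 0))) i j"
      by (simp add: corner_def)
    moreover have "corner n (snd (f (2*n, G t))) i j = (e / t) *\<^sub>C (snd (f (n, Xt)) i j - snd (f (n, X)) i j)"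
      using cornGt by simp
    moreover have "inverse e * (e / t) = inverse t" using e0 by (simp add: field_simps)
    ultimately show "Q i j = inverse e *\<^sub>C corner n (\<lambda>a b. snd (f (2*n, G t)) a b - snd (f (2*n, G 0)) a b) i j"
      unfolding Q_def L_def e_def[symmetric]
      by (simp only: scaleC_diff_right scaleC_scaleC)
  qed
  have dm: "(\<lambda>a b. snd (f (2*n, G t)) a b - snd (f (2*n, G 0)) a b) \<in> mats (2*n)"
    using Gtm G0m by (rule mats_diff)
  have "nrmW n Q = cmod (inverse e) * nrmW n (corner n (\<lambda>a b. snd (f (2*n, G t)) a b - snd (f (2*n, G 0)) a b))"
    unfolding Qeq by (rule os_hom[OF osW n1 mats_corner])
  also have "\<dots> \<le> (1 / \<epsilon>) * nrmW (2*n) (\<lambda>a b. snd (f (2*n, G t)) a b - snd (f (2*n, G 0)) a b)"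
  proof -
    have ci: "cmod (inverse e) = 1 / \<epsilon>" using cme by (metis norm_inverse inverse_eq_divide)
    show ?thesis unfolding ci using corner_le[OF osW n1 dm] eps by (intro mult_left_mono) auto
  qed
  also have "\<dots> \<le> (1 / \<epsilon>) * ((4 * M / r) * (cmod t * z))"
  proof -
    have "nrmW (2*n) (\<lambda>a b. snd (f (2*n, G t)) a b - snd (f (2*n, G 0)) a b) \<le> (4 * M / r) * (cmod t * z)"
      using lipG unfolding nGG by (simp add: mult.commute)
    then show ?thesis by (intro mult_left_mono) (use eps in auto)
  qed
  finally have "nrmW n Q \<le> (1 / \<epsilon>) * (4 * M / r) * (cmod t * nrmV n Z)" unfolding z_def by simp
  then show ?thesis using Qm unfolding Q_def Xt_def by simp
qed


lemma ulb_data: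
  assumes ulb: "uniformly_locally_bounded nrmV nrmW \<Omega> f" and Y: "(s, Y) \<in> \<Omega>"
  obtains r M where "0 < r" "ncball nrmV s Y r \<subseteq> \<Omega>"
    "\<And>k X. (k, X) \<in> ncball nrmV s Y r \<Longrightarrow> nrmW k (snd (f (k, X))) \<le> M"
proof -
  have "\<exists>r>0. ncball nrmV s Y r \<subseteq> \<Omega> \<and>
        (\<exists>M. \<forall>k X. (k, X) \<in> ncball nrmV s Y r \<longrightarrow> nrmW k (snd (f (k, X))) \<le> M)"
    using ulb Y unfolding uniformly_locally_bounded_def by blast
  then obtain r where r: "0 < r" "ncball nrmV s Y r \<subseteq> \<Omega>"
    and "\<exists>M. \<forall>k X. (k, X) \<in> ncball nrmV s Y r \<longrightarrow> nrmW k (snd (f (k, X))) \<le> M" by blast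
  then obtain M where "\<forall>k X. (k, X) \<in> ncball nrmV s Y r \<longrightarrow> nrmW k (snd (f (k, X))) \<le> M" by blast
  then show ?thesis using that[OF r] by blast
qed

lemma ulb_imp_gd:
  assumes ulb: "uniformly_locally_bounded nrmV nrmW \<Omega> f"
  shows "G_differentiable nrmW \<Omega> f"
  unfolding G_differentiable_def
proof (intro allI impI)
  fix n :: nat and X Z :: "nat \<Rightarrow> nat \<Rightarrow> 'v" assume a: "(n, X) \<in> \<Omega> \<and> Z \<in> mats n"
  then have X: "(n, X) \<in> \<Omega>" and Z: "Z \<in> mats n" by auto
  obtain r M where r: "0 < r" and ball: "ncball nrmV n X r \<subseteq> \<Omega>"
    and bnd: "\<And>k Y. (k, Y) \<in> ncball nrmV n X r \<Longrightarrow> nrmW k (snd (f (k, Y))) \<le> M"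
    using ulb_data[OF ulb X] by blast
  have n1: "1 \<le> n" using om_ncspace[OF osV osW ncs ncf X] by auto
  define z where "z = nrmV n Z"
  have z0: "0 \<le> z" unfolding z_def by (rule os_nonneg[OF osV n1 Z])
  define \<epsilon> where "\<epsilon> = r / (8 * (z + 1))"
  have eps0: "0 < \<epsilon>" unfolding \<epsilon>_def using r z0 by simp
  have eps1: "\<epsilon> * nrmV n Z \<le> r / 8"
  proof -
    have "\<epsilon> * z = (r / 8) * (z / (z + 1))" unfolding \<epsilon>_def by (simp add: field_simps)
    also have "\<dots> \<le> (r / 8) * 1" using r z0 by (intro mult_left_mono) auto
    finally show ?thesis unfolding z_def by simp
  qed
  define G where "G = (\<lambda>t. (\<lambda>i j. dsum n n X (\<lambda>p q. X p q + t *\<^sub>C Z p q) i j + ur n (\<lambda>p q. complex_of_real \<epsilon> *\<^sub>C Z p q) i j))"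
  define L where "L = (\<lambda>i j. inverse (complex_of_real \<epsilon>) *\<^sub>C corner n (snd (f (2*n, G 0))) i j)"
  have est: "(\<lambda>i j. inverse t *\<^sub>C (snd (f (n, \<lambda>p q. X p q + t *\<^sub>C Z p q)) i j - snd (f (n, X)) i j) - L i j) \<in> mats n \<and>
     nrmW n (\<lambda>i j. inverse t *\<^sub>C (snd (f (n, \<lambda>p q. X p q + t *\<^sub>C Z p q)) i j - snd (f (n, X)) i j) - L i j)
       \<le> (1 / \<epsilon>) * (4 * M / r) * (cmod t * nrmV n Z)" if "t \<noteq> 0" "cmod t * nrmV n Z < r / 4" for t
    unfolding L_def G_def by (rule gd_est[OF X r ball bnd Z eps0 eps1 that])
  have Lm: "L \<in> mats n" unfolding L_def by (intro mats_scaleC mats_corner)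
  show "\<exists>L\<in>mats n. ((\<lambda>t. nrmW n (\<lambda>i j. inverse t *\<^sub>C (snd (f (n, \<lambda>p q. X p q + t *\<^sub>C Z p q)) i j - snd (f (n, X)) i j) - L i j)) \<longlongrightarrow> 0) (at 0)"
  proof (rule bexI[OF _ Lm], rule Lim_null_comparison)
    define d where "d = r / (4 * (z + 1))"
    have d0: "0 < d" unfolding d_def using r z0 by simp
    show "\<forall>\<^sub>F t in at 0. norm (nrmW n (\<lambda>i j. inverse t *\<^sub>C (snd (f (n, \<lambda>p q. X p q + t *\<^sub>C Z p q)) i j - snd (f (n, X)) i j) - L i j))
          \<le> (1 / \<epsilon>) * (4 * M / r) * (cmod t * nrmV n Z)"
      unfolding eventually_at
    proof (rule exI[of _ d], intro conjI ballI impI d0)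
      fix t :: complex assume t: "t \<noteq> 0 \<and> dist t 0 < d"
      have "cmod t * z \<le> cmod t * (z + 1)" by (intro mult_left_mono) auto
      also have "\<dots> < d * (z + 1)" using t z0 by (intro mult_strict_right_mono) auto
      also have "d * (z + 1) = r / 4" unfolding d_def using z0 by (simp add: field_simps)
      finally have tz: "cmod t * nrmV n Z < r / 4" unfolding z_def .
      have Q: "(\<lambda>i j. inverse t *\<^sub>C (snd (f (n, \<lambda>p q. X p q + t *\<^sub>C Z p q)) i j - snd (f (n, X)) i j) - L i j) \<in> mats n"
        and B: "nrmW n (\<lambda>i j. inverse t *\<^sub>C (snd (f (n, \<lambda>p q. X p q + t *\<^sub>C Z p q)) i j - snd (f (n, X)) i j) - L i j)
       \<le> (1 / \<epsilon>) * (4 * M / r) * (cmod t * nrmV n Z)" using est[OF _ tz] t by auto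
      have "0 \<le> nrmW n (\<lambda>i j. inverse t *\<^sub>C (snd (f (n, \<lambda>p q. X p q + t *\<^sub>C Z p q)) i j - snd (f (n, X)) i j) - L i j)"
        by (rule os_nonneg[OF osW n1 Q])
      then show "norm (nrmW n (\<lambda>i j. inverse t *\<^sub>C (snd (f (n, \<lambda>p q. X p q + t *\<^sub>C Z p q)) i j - snd (f (n, X)) i j) - L i j))
          \<le> (1 / \<epsilon>) * (4 * M / r) * (cmod t * nrmV n Z)" using B by simp
    qed
    have "((\<lambda>t::complex. (1 / \<epsilon>) * (4 * M / r) * (cmod t * nrmV n Z)) \<longlongrightarrow> (1 / \<epsilon>) * (4 * M / r) * (cmod (0::complex) * nrmV n Z)) (at 0)"
      by (intro tendsto_intros)
    then show "((\<lambda>t::complex. (1 / \<epsilon>) * (4 * M / r) * (cmod t * nrmV n Z)) \<longlongrightarrow> 0) (at 0)" by simp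
  qed
qed

end




context
  fixes nrmV :: "nat \<Rightarrow> (nat \<Rightarrow> nat \<Rightarrow> 'v::{complex_normed_vector,banach}) \<Rightarrow> real"
    and nrmW :: "nat \<Rightarrow> (nat \<Rightarrow> nat \<Rightarrow> 'w::{complex_normed_vector,banach}) \<Rightarrow> real"
    and \<Omega> :: "(nat \<times> (nat \<Rightarrow> nat \<Rightarrow> 'v)) set"
    and f :: "nat \<times> (nat \<Rightarrow> nat \<Rightarrow> 'v) \<Rightarrow> nat \<times> (nat \<Rightarrow> nat \<Rightarrow> 'w)"
  assumes osV: "operator_space nrmV" and osW: "operator_space nrmW"
    and ncs: "nc_set \<Omega>" and ncf: "nc_function \<Omega> f"
    and opn: "openin (nc_top nrmV) \<Omega>"
begin

lemma om_sub: "\<Omega> \<subseteq> ncspace" using ncs unfolding nc_set_def by blast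

lemma top_dom: "topspace (subtopology (nc_top nrmV) \<Omega>) = \<Omega>"
  using topspace_nc_top[OF osV] om_sub by auto

lemma top_cod: "topspace (subtopology (nc_top nrmW) ncspace) = ncspace"
  using topspace_nc_top[OF osW] by auto

lemma f_in_ncspace: "x \<in> \<Omega> \<Longrightarrow> f x \<in> ncspace"
  using ncf unfolding nc_function_def by (cases x) blast

lemma ulb_imp_cont:
  assumes ulb: "uniformly_locally_bounded nrmV nrmW \<Omega> f"
  shows "continuous_map (subtopology (nc_top nrmV) \<Omega>) (subtopology (nc_top nrmW) ncspace) f"
  unfolding continuous_map_def top_dom top_cod
proof (intro conjI allI impI)
  show "f \<in> \<Omega> \<rightarrow> ncspace" using f_in_ncspace by blast
  fix U assume "openin (subtopology (nc_top nrmW) ncspace) U"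
  then obtain T where T: "openin (nc_top nrmW) T" "U = T \<inter> ncspace"
    unfolding openin_subtopology by blast
  have Tn: "nbhd_open nrmW T" using T(1) openin_nc_top[OF osW] by blast
  define P where "P = {x \<in> \<Omega>. f x \<in> U}"
  have "nbhd_open nrmV P" unfolding nbhd_open_def[OF osV]
  proof (intro conjI allI impI)
    show "P \<subseteq> ncspace" using om_sub P_def by blast
    fix s Y assume sY: "(s, Y) \<in> P"
    then have Y: "(s, Y) \<in> \<Omega>" and fU: "f (s, Y) \<in> U" unfolding P_def by auto
    define FY where "FY = snd (f (s, Y))"
    have fY: "f (s, Y) = (s, FY)" "FY \<in> mats s" using f_shape[OF osV osW ncs ncf Y] FY_def by auto
    have s1: "1 \<le> s" and Ym: "Y \<in> mats s" using om_ncspace[OF osV osW ncs ncf Y] by auto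
    have sT: "(s, FY) \<in> T" using fU fY T(2) by auto
    have "\<forall>n X. (n, X) \<in> T \<longrightarrow> (\<exists>r>0. ncball nrmW n X r \<subseteq> T)"
      using Tn unfolding nbhd_open_def[OF osW] by blast
    then have "\<exists>r>0. ncball nrmW s FY r \<subseteq> T" using sT by blast
    then obtain \<rho> where rho: "0 < \<rho>" "ncball nrmW s FY \<rho> \<subseteq> T" by blast
    obtain r M where r: "0 < r" and ball: "ncball nrmV s Y r \<subseteq> \<Omega>"
      and bnd: "\<And>k X. (k, X) \<in> ncball nrmV s Y r \<Longrightarrow> nrmW k (snd (f (k, X))) \<le> M"
      using ulb_data[OF osV osW ncs ncf ulb Y] by blast
    have "nrmW s FY \<le> M" using bnd[OF ncball_center[OF osV s1 Ym r]] fY by simp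
    moreover have "0 \<le> nrmW s FY" by (rule os_nonneg[OF osW s1 fY(2)])
    ultimately have M0: "0 \<le> M" by simp
    define K where "K = 4 * M / r"
    have K0: "0 \<le> K" unfolding K_def using M0 r by simp
    define \<delta> where "\<delta> = min (r / 2) (\<rho> / (K + 1))"
    have d0: "0 < \<delta>" unfolding \<delta>_def using r rho K0 by simp
    have Kd: "K * \<delta> < \<rho>"
    proof -
      have "K * \<delta> \<le> K * (\<rho> / (K + 1))" unfolding \<delta>_def using K0 by (intro mult_left_mono) auto
      also have "\<dots> < \<rho>" using K0 rho by (simp add: field_simps)
      finally show ?thesis .
    qed
    have "ncball nrmV s Y \<delta> \<subseteq> P"
    proof
      fix p assume "p \<in> ncball nrmV s Y \<delta>"
      then obtain k X m where p: "p = (k, X)" "1 \<le> m" "k = s * m" "X \<in> mats k"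
        and dX: "nrmV k (\<lambda>i j. X i j - dsum_rep s m Y i j) < \<delta>"
        unfolding ncball_def by blast
      have "\<delta> \<le> r" using r unfolding \<delta>_def by simp
      then have pr: "p \<in> ncball nrmV s Y r" using \<open>p \<in> ncball nrmV s Y \<delta>\<close> ncball_mono by blast
      then have pO: "(k, X) \<in> \<Omega>" using ball p by auto
      have rep: "(s * m, dsum_rep s m Y) \<in> \<Omega>" "f (s * m, dsum_rep s m Y) = (s * m, dsum_rep s m FY)"
        using f_rep[OF osV osW ncs ncf Y p(2)] FY_def by auto
      have k1: "1 \<le> k" using p s1 by simp
      have z: "nrmV (s*m) (\<lambda>i j. dsum_rep s m Y i j - dsum_rep s m Y i j) = 0"
        using os_zero[OF osV, of "s*m"] k1 p by simp
      have "nrmW (s*m) (\<lambda>i j. snd (f (s*m, X)) i j - snd (f (s*m, dsum_rep s m Y)) i j)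
          \<le> K * nrmV (s*m) (\<lambda>i j. X i j - dsum_rep s m Y i j)"
        unfolding K_def
        by (rule lip[OF osV osW ncs ncf Y r ball bnd p(2)])
           (use p dX \<delta>_def z r in \<open>auto intro: mats_dsum_rep\<close>)
      also have "\<dots> \<le> K * \<delta>" using dX p K0 by (intro mult_left_mono) auto
      also have "\<dots> < \<rho>" by (rule Kd)
      finally have "nrmW k (\<lambda>i j. snd (f (k, X)) i j - dsum_rep s m FY i j) < \<rho>"
        using rep p by simp
      moreover have "snd (f (k, X)) \<in> mats k" "f (k, X) = (k, snd (f (k, X)))"
        using f_shape[OF osV osW ncs ncf pO] by auto
      ultimately have "f (k, X) \<in> ncball nrmW s FY \<rho>"
        unfolding ncball_def using p by (auto intro!: exI[of _ m])
      then have "f (k, X) \<in> U" using rho T(2) f_in_ncspace[OF pO] by blast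
      then show "p \<in> P" unfolding P_def using p pO by simp
    qed
    then show "\<exists>r>0. ncball nrmV s Y r \<subseteq> P" using d0 by blast
  qed
  then have "openin (nc_top nrmV) P" using openin_nc_top[OF osV] by blast
  moreover have "{x \<in> \<Omega>. f x \<in> U} = P \<inter> \<Omega>" unfolding P_def by blast
  ultimately show "openin (subtopology (nc_top nrmV) \<Omega>) {x \<in> \<Omega>. f x \<in> U}"
    unfolding openin_subtopology by blast
qed

lemma cont_imp_ulb:
  assumes cont: "continuous_map (subtopology (nc_top nrmV) \<Omega>) (subtopology (nc_top nrmW) ncspace) f"
  shows "uniformly_locally_bounded nrmV nrmW \<Omega> f"
  unfolding uniformly_locally_bounded_def
proof (intro allI impI)
  fix s :: nat and Y :: "nat \<Rightarrow> nat \<Rightarrow> 'v" assume Y: "(s, Y) \<in> \<Omega>"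
  define FY where "FY = snd (f (s, Y))"
  have fY: "f (s, Y) = (s, FY)" "FY \<in> mats s" using f_shape[OF osV osW ncs ncf Y] FY_def by auto
  have s1: "1 \<le> s" and Ym: "Y \<in> mats s" using om_ncspace[OF osV osW ncs ncf Y] by auto
  define B where "B = ncball nrmW s FY 1"
  have "openin (nc_top nrmW) B" unfolding B_def by (rule ncball_open[OF osW s1 fY(2)]) simp
  then have "openin (subtopology (nc_top nrmW) ncspace) (B \<inter> ncspace)"
    unfolding openin_subtopology by blast
  then have "openin (subtopology (nc_top nrmV) \<Omega>) {x \<in> \<Omega>. f x \<in> B \<inter> ncspace}"
    using cont unfolding continuous_map_def top_dom by blast
  then obtain T where T: "openin (nc_top nrmV) T" "{x \<in> \<Omega>. f x \<in> B \<inter> ncspace} = T \<inter> \<Omega>"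
    unfolding openin_subtopology by blast
  define P where "P = {x \<in> \<Omega>. f x \<in> B \<inter> ncspace}"
  have "openin (nc_top nrmV) P" unfolding P_def T(2) using T(1) opn by (rule openin_Int)
  then have Pn: "nbhd_open nrmV P" using openin_nc_top[OF osV] by blast
  have "f (s, Y) \<in> B" unfolding B_def fY by (rule ncball_center[OF osW s1 fY(2)]) simp
  then have "(s, Y) \<in> P" unfolding P_def using Y f_in_ncspace[OF Y] by blast
  then obtain r where r: "0 < r" "ncball nrmV s Y r \<subseteq> P" using Pn unfolding nbhd_open_def[OF osV] by blast
  have "ncball nrmV s Y r \<subseteq> \<Omega>" using r unfolding P_def by blast
  moreover have "\<forall>k X. (k, X) \<in> ncball nrmV s Y r \<longrightarrow> nrmW k (snd (f (k, X))) \<le> 1 + nrmW s FY"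
  proof (intro allI impI)
    fix k X assume "(k, X) \<in> ncball nrmV s Y r"
    then have kP: "(k, X) \<in> P" using r by blast
    then have kO: "(k, X) \<in> \<Omega>" and fB: "f (k, X) \<in> B" unfolding P_def by auto
    have fk: "f (k, X) = (k, snd (f (k, X)))" "snd (f (k, X)) \<in> mats k"
      using f_shape[OF osV osW ncs ncf kO] by auto
    have "(k, snd (f (k, X))) \<in> B" using fB by (subst (asm) fk(1))
    then have "\<exists>m\<ge>1. k = s * m \<and> snd (f (k, X)) \<in> mats k \<and>
       nrmW k (\<lambda>i j. snd (f (k, X)) i j - dsum_rep s m FY i j) < 1"
      unfolding B_def ncball_def by (simp only: mem_Collect_eq prod.case)
    then obtain m where m: "1 \<le> m" "k = s * m"
      and d: "nrmW k (\<lambda>i j. snd (f (k, X)) i j - dsum_rep s m FY i j) < 1"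
      by blast
    have k1: "1 \<le> k" using m s1 by simp
    have "nrmW k (snd (f (k, X))) \<le> nrmW k (\<lambda>i j. snd (f (k, X)) i j - dsum_rep s m FY i j) + nrmW k (dsum_rep s m FY)"
      using m by (intro os_sum_le[OF osW k1 fk(2)]) (auto intro: mats_dsum_rep)
    also have "nrmW k (dsum_rep s m FY) = nrmW s FY" unfolding m(2) by (rule os_rep[OF osW s1 m(1) fY(2)])
    finally show "nrmW k (snd (f (k, X))) \<le> 1 + nrmW s FY" using d by simp
  qed
  ultimately show "\<exists>r>0. ncball nrmV s Y r \<subseteq> \<Omega> \<and>
        (\<exists>M. \<forall>k X. (k, X) \<in> ncball nrmV s Y r \<longrightarrow> nrmW k (snd (f (k, X))) \<le> M)"
    using r by blast
qed

end

theorem corollary7p28: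
  fixes nrmV :: "nat \<Rightarrow> (nat \<Rightarrow> nat \<Rightarrow> 'v::{complex_normed_vector,banach}) \<Rightarrow> real"
    and nrmW :: "nat \<Rightarrow> (nat \<Rightarrow> nat \<Rightarrow> 'w::{complex_normed_vector,banach}) \<Rightarrow> real"
    and \<Omega> :: "(nat \<times> (nat \<Rightarrow> nat \<Rightarrow> 'v)) set"
    and f :: "nat \<times> (nat \<Rightarrow> nat \<Rightarrow> 'v) \<Rightarrow> nat \<times> (nat \<Rightarrow> nat \<Rightarrow> 'w)"
  assumes "operator_space nrmV" and "operator_space nrmW"
    and "nc_set \<Omega>" and "openin (nc_top nrmV) \<Omega>"
    and "nc_function \<Omega> f"
  shows "(uniformly_locally_bounded nrmV nrmW \<Omega> f \<longleftrightarrow>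
            continuous_map (subtopology (nc_top nrmV) \<Omega>) (subtopology (nc_top nrmW) ncspace) f)
       \<and> (uniformly_locally_bounded nrmV nrmW \<Omega> f \<longleftrightarrow> uniformly_analytic nrmV nrmW \<Omega> f)"
proof -
  have a: "uniformly_locally_bounded nrmV nrmW \<Omega> f \<Longrightarrow>
      continuous_map (subtopology (nc_top nrmV) \<Omega>) (subtopology (nc_top nrmW) ncspace) f"
    by (rule ulb_imp_cont[OF assms(1,2,3,5,4)])
  have b: "continuous_map (subtopology (nc_top nrmV) \<Omega>) (subtopology (nc_top nrmW) ncspace) f \<Longrightarrow>
      uniformly_locally_bounded nrmV nrmW \<Omega> f"
    by (rule cont_imp_ulb[OF assms(1,2,3,5,4)])
  have c: "uniformly_locally_bounded nrmV nrmW \<Omega> f \<Longrightarrow> G_differentiable nrmW \<Omega> f"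
    by (rule ulb_imp_gd[OF assms(1,2,3,5)])
  show ?thesis unfolding uniformly_analytic_def using a b c by (intro conjI iffI) auto
qed



end
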